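(* Let $H$ be a complex Hilbert space, $A\in B(H)$ a nonzero positive semidefinite operator, $P$ the orthogonal projection onto $\overline{R(A)}$, and $T\in B_{A^{1/2}}(H)$. Let $T_{eff}\in B(\overline{R(A)})$ be defined by $T_{eff}x=PTPx$ for $x\in\overline{R(A)}$, and let $r(T_{eff})$ denote its (usual) spectral radius. Then $$r(T_{eff})=r_A(T^{\diamond})\le\sup\{|\lambda| : \lambda\in\sigma_A(T)\}.$$
   Context: $\|x\|_A=\langle Ax,x\rangle^{1/2}$. For $S\in B(H)$, $\|S\|_A=\sup\{\|Sx\|_A : x\in\overline{R(A)},\ \|x\|_A=1\}$. $B_{A^{1/2}}(H)=\{S\in B(H): R(S^*A^{1/2})\subset R(A^{1/2})\}$. For $S\in B_{A^{1/2}}(H)$, $S^{\diamond}$ is the unique operator in $B(H)$ with $S^*A^{1/2}=A^{1/2}S^{\diamond}$ and $R(S^{\diamond})\subset\overline{R(A^{1/2})}$; $S^\diamond\in B_{A^{1/2}}(H)$. $r_A(S)=\lim_{n\to\infty}\|S^n\|_A^{1/n}$. $S\in B_{A^{1/2}}(H)$ is $A$-invertible in $B_{A^{1/2}}(H)$ if there is a nonzero $R\in B_{A^{1/2}}(H)$ with $ASR=ARS=A$; $\rho_A(S)=\{\lambda:\lambda I-S$ is $A$-invertible in $B_{A^{1/2}}(H)\}$, $\sigma_A(S)=\mathbb C\setminus\rho_A(S)$. *)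

theory Defs
  imports "HOL-Analysis.Analysis"
begin

text \<open>HOL-Analysis has no complex inner product spaces, so we introduce them as a
  type class: a real normed vector space with a compatible complex scalar
  multiplication and a complex inner product (linear in the first argument,
  conjugate linear in the second) inducing the norm.\<close>

class complex_inner = real_normed_vector +
  fixes scaleC :: "complex \<Rightarrow> 'a \<Rightarrow> 'a"
    and cinner :: "'a \<Rightarrow> 'a \<Rightarrow> complex"
  assumes scaleC_add_right: "scaleC a (x + y) = scaleC a x + scaleC a y"
    and scaleC_add_left: "scaleC (a + b) x = scaleC a x + scaleC b x"
    and scaleC_scaleC: "scaleC a (scaleC b x) = scaleC (a * b) x"
    and scaleC_one: "scaleC 1 x = x"
    and scaleR_scaleC: "scaleR r x = scaleC (complex_of_real r) x"
    and cinner_commute: "cinner x y = cnj (cinner y x)"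
    and cinner_add_left: "cinner (x + y) z = cinner x z + cinner y z"
    and cinner_scaleC_left: "cinner (scaleC a x) y = a * cinner x y"
    and cinner_self_nonneg: "Im (cinner x x) = 0 \<and> 0 \<le> Re (cinner x x)"
    and cinner_self_eq_zero: "cinner x x = 0 \<longleftrightarrow> x = 0"
    and norm_eq_sqrt_cinner: "norm x = sqrt (Re (cinner x x))"

class chilbert_space = complex_inner + complete_space

definition clinear :: "('a::complex_inner \<Rightarrow> 'b::complex_inner) \<Rightarrow> bool" where
  "clinear f \<longleftrightarrow> (\<forall>x y. f (x + y) = f x + f y) \<and> (\<forall>a x. f (scaleC a x) = scaleC a (f x))"

definition bounded_clinear :: "('a::complex_inner \<Rightarrow> 'b::complex_inner) \<Rightarrow> bool" where
  "bounded_clinear f \<longleftrightarrow> clinear f \<and> (\<exists>K. \<forall>x. norm (f x) \<le> norm x * K)"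

definition adjoint :: "('a::complex_inner \<Rightarrow> 'a) \<Rightarrow> ('a \<Rightarrow> 'a)" where
  "adjoint S = (THE R. \<forall>x y. cinner (S x) y = cinner x (R y))"

definition positive_op :: "('a::complex_inner \<Rightarrow> 'a) \<Rightarrow> bool" where
  "positive_op A \<longleftrightarrow> bounded_clinear A \<and>
     (\<forall>x. Im (cinner (A x) x) = 0 \<and> 0 \<le> Re (cinner (A x) x))"

definition sqrt_op :: "('a::complex_inner \<Rightarrow> 'a) \<Rightarrow> ('a \<Rightarrow> 'a)" where
  "sqrt_op A = (THE S. positive_op S \<and> S \<circ> S = A)"

definition orth_proj :: "'a::complex_inner set \<Rightarrow> 'a \<Rightarrow> 'a" where
  "orth_proj M x = (THE m. m \<in> M \<and> (\<forall>y\<in>M. cinner (x - m) y = 0))"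

definition normA :: "('a::complex_inner \<Rightarrow> 'a) \<Rightarrow> 'a \<Rightarrow> real" where
  "normA A x = sqrt (Re (cinner (A x) x))"

definition opnormA :: "('a::complex_inner \<Rightarrow> 'a) \<Rightarrow> ('a \<Rightarrow> 'a) \<Rightarrow> real" where
  "opnormA A S = Sup {normA A (S x) | x. x \<in> closure (range A) \<and> normA A x = 1}"

definition BAhalf :: "('a::complex_inner \<Rightarrow> 'a) \<Rightarrow> ('a \<Rightarrow> 'a) set" where
  "BAhalf A = {S. bounded_clinear S \<and> range (adjoint S \<circ> sqrt_op A) \<subseteq> range (sqrt_op A)}"

definition diamond :: "('a::complex_inner \<Rightarrow> 'a) \<Rightarrow> ('a \<Rightarrow> 'a) \<Rightarrow> ('a \<Rightarrow> 'a)" where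
  "diamond A S = (THE R. bounded_clinear R \<and> adjoint S \<circ> sqrt_op A = sqrt_op A \<circ> R
       \<and> range R \<subseteq> closure (range (sqrt_op A)))"

definition spec_radA :: "('a::complex_inner \<Rightarrow> 'a) \<Rightarrow> ('a \<Rightarrow> 'a) \<Rightarrow> real" where
  "spec_radA A S = lim (\<lambda>n. opnormA A (S ^^ n) powr (1 / real n))"

definition A_invertible :: "('a::complex_inner \<Rightarrow> 'a) \<Rightarrow> ('a \<Rightarrow> 'a) \<Rightarrow> bool" where
  "A_invertible A S \<longleftrightarrow> (\<exists>R\<in>BAhalf A. R \<noteq> (\<lambda>x. 0) \<and> A \<circ> S \<circ> R = A \<and> A \<circ> R \<circ> S = A)"

definition spectrumA :: "('a::complex_inner \<Rightarrow> 'a) \<Rightarrow> ('a \<Rightarrow> 'a) \<Rightarrow> complex set" where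
  "spectrumA A S = {l. \<not> A_invertible A (\<lambda>x. scaleC l x - S x)}"

text \<open>An operator \<open>T\<close> on the closed subspace \<open>M\<close> (only its values on \<open>M\<close> matter)
  is invertible in \<open>B(M)\<close> if it has a bounded linear two-sided inverse on \<open>M\<close>.\<close>
definition invertible_on :: "'a::complex_inner set \<Rightarrow> ('a \<Rightarrow> 'a) \<Rightarrow> bool" where
  "invertible_on M T \<longleftrightarrow> (\<exists>R. R ` M \<subseteq> M
      \<and> (\<forall>x\<in>M. \<forall>y\<in>M. R (x + y) = R x + R y)
      \<and> (\<forall>a. \<forall>x\<in>M. R (scaleC a x) = scaleC a (R x))
      \<and> (\<exists>K. \<forall>x\<in>M. norm (R x) \<le> norm x * K)
      \<and> (\<forall>x\<in>M. R (T x) = x \<and> T (R x) = x))"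

definition spectrum_on :: "'a::complex_inner set \<Rightarrow> ('a \<Rightarrow> 'a) \<Rightarrow> complex set" where
  "spectrum_on M T = {l. \<not> invertible_on M (\<lambda>x. scaleC l x - T x)}"

definition spec_rad_on :: "'a::complex_inner set \<Rightarrow> ('a \<Rightarrow> 'a) \<Rightarrow> real" where
  "spec_rad_on M T = Sup (cmod ` spectrum_on M T)"

end

theory Submission
  imports Defs "HOL-Complex_Analysis.Complex_Analysis"
begin

lemma cneg_helper: "(a::complex) + b = 0 \<Longrightarrow> b = - a"
  by (simp add: add_eq_0_iff)

lemma cmult_cnj_helper: "Re ((a::complex) * cnj a * complex_of_real r) = (cmod a)\<^sup>2 * r"
  by (simp add: complex_mult_cnj cmod_power2 del: of_real_power)

context complex_inner
begin

lemma scaleC_zero_right [simp]: "scaleC a 0 = 0"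
  using scaleC_add_right[of a 0 0] by simp

lemma scaleC_zero_left [simp]: "scaleC 0 x = 0"
  using scaleC_add_left[of 0 0 x] by simp

lemma scaleC_minus_right: "scaleC a (- x) = - scaleC a x"
  using add.inverse_unique[of "scaleC a x" "scaleC a (-x)"] scaleC_add_right[of a x "-x"] by simp

lemma scaleC_diff_right: "scaleC a (x - y) = scaleC a x - scaleC a y"
  using scaleC_add_right[of a x "-y"] by (simp add: scaleC_minus_right)

lemma scaleC_minus_left: "scaleC (- a) x = - scaleC a x"
  using add.inverse_unique[of "scaleC a x" "scaleC (-a) x"] scaleC_add_left[of a "-a" x] by simp

lemma scaleC_diff_left: "scaleC (a - b) x = scaleC a x - scaleC b x"
  using scaleC_add_left[of a "-b" x] by (simp add: scaleC_minus_left)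

lemma scaleC_minus_one: "scaleC (-1) x = - x"
  by (simp add: scaleC_minus_left scaleC_one)

lemma scaleC_sum_right: "scaleC a (sum f S) = (\<Sum>i\<in>S. scaleC a (f i))"
  by (induct S rule: infinite_finite_induct) (auto simp: scaleC_add_right)

lemma scaleC_sum_left: "scaleC (sum f S) x = (\<Sum>i\<in>S. scaleC (f i) x)"
  by (induct S rule: infinite_finite_induct) (auto simp: scaleC_add_left)

lemma cinner_add_right: "cinner x (y + z) = cinner x y + cinner x z"
  by (metis cinner_commute cinner_add_left complex_cnj_add)

lemma cinner_scaleC_right: "cinner x (scaleC a y) = cnj a * cinner x y"
  by (metis cinner_commute cinner_scaleC_left complex_cnj_mult)

lemma cinner_zero_left [simp]: "cinner 0 y = 0"
  using cinner_add_left[of 0 0 y] by simp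

lemma cinner_zero_right [simp]: "cinner x 0 = 0"
  using cinner_add_right[of x 0 0] by simp

lemma cinner_minus_left: "cinner (- x) y = - cinner x y"
  using cinner_add_left[of x "-x" y] by (intro cneg_helper) simp

lemma cinner_minus_right: "cinner x (- y) = - cinner x y"
  using cinner_add_right[of x y "-y"] by (intro cneg_helper) simp

lemma cinner_diff_left: "cinner (x - y) z = cinner x z - cinner y z"
  using cinner_add_left[of x "-y" z] by (simp add: cinner_minus_left)

lemma cinner_diff_right: "cinner x (y - z) = cinner x y - cinner x z"
  using cinner_add_right[of x y "-z"] by (simp add: cinner_minus_right)

lemma cinner_sum_left: "cinner (sum f S) y = (\<Sum>i\<in>S. cinner (f i) y)"
  by (induct S rule: infinite_finite_induct) (auto simp: cinner_add_left)

lemma cinner_sum_right: "cinner y (sum f S) = (\<Sum>i\<in>S. cinner y (f i))"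
  by (induct S rule: infinite_finite_induct) (auto simp: cinner_add_right)

lemma cinner_self: "cinner x x = complex_of_real ((norm x)\<^sup>2)"
proof -
  have "Im (cinner x x) = 0" "0 \<le> Re (cinner x x)" using cinner_self_nonneg by auto
  moreover have "(norm x)\<^sup>2 = Re (cinner x x)"
    using norm_eq_sqrt_cinner[of x] calculation by simp
  ultimately show ?thesis by (simp add: complex_eq_iff)
qed

lemma norm_sq_cinner: "(norm x)\<^sup>2 = Re (cinner x x)"
  using cinner_self[of x] by simp

lemma norm_scaleC [simp]: "norm (scaleC a x) = cmod a * norm x"
proof -
  have "(norm (scaleC a x))\<^sup>2 = Re (cinner (scaleC a x) (scaleC a x))"
    by (rule norm_sq_cinner)
  also have "\<dots> = Re (a * cnj a * cinner x x)"
    by (simp only: cinner_scaleC_left cinner_scaleC_right mult.assoc mult.left_commute)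
  also have "\<dots> = (cmod a)\<^sup>2 * (norm x)\<^sup>2"
    by (simp only: cinner_self cmult_cnj_helper)
  finally have "(norm (scaleC a x))\<^sup>2 = (cmod a * norm x)\<^sup>2"
    by (simp add: power_mult_distrib)
  then show ?thesis
    by (simp add: power2_eq_iff_nonneg)
qed

lemma cinner_eq_zero_iff: "cinner x x = 0 \<longleftrightarrow> x = 0"
  by (rule cinner_self_eq_zero)

lemma scaleC_of_real: "scaleC (complex_of_real r) x = scaleR r x"
  by (simp add: scaleR_scaleC)

lemma scaleC_cancel: "a \<noteq> 0 \<Longrightarrow> scaleC a x = scaleC a y \<Longrightarrow> x = y"
proof -
  assume a: "a \<noteq> 0" "scaleC a x = scaleC a y"
  have ia: "inverse a * a = 1" using a by simp
  have "x = scaleC (inverse a) (scaleC a x)" by (simp only: scaleC_scaleC ia scaleC_one)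
  also have "\<dots> = scaleC (inverse a) (scaleC a y)" using a by simp
  also have "\<dots> = y" by (simp only: scaleC_scaleC ia scaleC_one)
  finally show ?thesis .
qed

lemma scaleC_eq_0_iff: "scaleC a x = 0 \<longleftrightarrow> a = 0 \<or> x = 0"
proof -
  have "scaleC a x = 0 \<longleftrightarrow> norm (scaleC a x) = 0" by (rule norm_eq_zero[symmetric])
  also have "\<dots> \<longleftrightarrow> a = 0 \<or> x = 0" by (simp only: norm_scaleC mult_eq_0_iff norm_eq_zero) simp
  finally show ?thesis .
qed

lemma cinner_ext_left: "(\<And>y. cinner x y = cinner x' y) \<Longrightarrow> x = x'"
proof -
  assume h: "\<And>y. cinner x y = cinner x' y"
  have "cinner (x - x') (x - x') = 0" by (simp add: cinner_diff_left h)
  then show ?thesis by (simp add: cinner_eq_zero_iff)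
qed

lemma cinner_ext_right: "(\<And>y. cinner y x = cinner y x') \<Longrightarrow> x = x'"
proof -
  assume h: "\<And>y. cinner y x = cinner y x'"
  have "cinner (x - x') (x - x') = 0" by (simp add: cinner_diff_right h)
  then show ?thesis by (simp add: cinner_eq_zero_iff)
qed

lemma norm_add_sq: "(norm (x + y))\<^sup>2 = (norm x)\<^sup>2 + (norm y)\<^sup>2 + 2 * Re (cinner x y)"
proof -
  have "cinner (x+y) (x+y) = cinner x x + cinner y y + (cinner x y + cnj (cinner x y))"
    by (simp add: cinner_add_left cinner_add_right cinner_commute[of y x])
  then show ?thesis by (simp add: norm_sq_cinner)
qed

lemma norm_diff_sq: "(norm (x - y))\<^sup>2 = (norm x)\<^sup>2 + (norm y)\<^sup>2 - 2 * Re (cinner x y)"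
  using norm_add_sq[of x "-y"] by (simp add: cinner_minus_right)

lemma parallelogram: "(norm (x + y))\<^sup>2 + (norm (x - y))\<^sup>2 = 2 * (norm x)\<^sup>2 + 2 * (norm y)\<^sup>2"
  using norm_add_sq[of x y] norm_diff_sq[of x y] by simp

end


lemma clinearI: "(\<And>x y. f (x + y) = f x + f y) \<Longrightarrow> (\<And>a x. f (scaleC a x) = scaleC a (f x)) \<Longrightarrow> clinear f"
  by (simp add: clinear_def)

lemma clinear_add: "clinear f \<Longrightarrow> f (x + y) = f x + f y"
  by (simp add: clinear_def)

lemma clinear_scaleC: "clinear f \<Longrightarrow> f (scaleC a x) = scaleC a (f x)"
  by (simp add: clinear_def)

lemma clinear_zero: "clinear f \<Longrightarrow> f 0 = 0"
  using clinear_scaleC[of f 0 0] by simp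

lemma clinear_minus: "clinear f \<Longrightarrow> f (- x) = - f x"
  using clinear_scaleC[of f "-1" x] by (simp add: scaleC_minus_one)

lemma clinear_diff: "clinear f \<Longrightarrow> f (x - y) = f x - f y"
  using clinear_add[of f x "-y"] clinear_minus[of f y] by simp

lemma clinear_sum: "clinear f \<Longrightarrow> f (sum g S) = (\<Sum>i\<in>S. f (g i))"
  by (induct S rule: infinite_finite_induct) (auto simp: clinear_add clinear_zero)

lemma clinear_linear: "clinear f \<Longrightarrow> linear f"
  by (rule linearI) (auto simp: clinear_add clinear_scaleC scaleR_scaleC)

lemma bounded_clinear_clinear: "bounded_clinear f \<Longrightarrow> clinear f"
  by (simp add: bounded_clinear_def)

lemma bounded_clinear_bound: "bounded_clinear f \<Longrightarrow> \<exists>K>0. \<forall>x. norm (f x) \<le> norm x * K"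
proof -
  assume "bounded_clinear f"
  then obtain K where K: "\<forall>x. norm (f x) \<le> norm x * K" by (auto simp: bounded_clinear_def)
  have "\<forall>x. norm (f x) \<le> norm x * (max K 1)"
    using K by (metis max.cobounded1 mult_left_mono norm_ge_zero order_trans)
  then show ?thesis by (intro exI[of _ "max K 1"]) auto
qed

lemma bounded_clinearI: "clinear f \<Longrightarrow> (\<And>x. norm (f x) \<le> norm x * K) \<Longrightarrow> bounded_clinear f"
  by (auto simp: bounded_clinear_def)

lemma bounded_clinear_linear: "bounded_clinear f \<Longrightarrow> bounded_linear f"
  unfolding bounded_linear_def bounded_linear_axioms_def
  by (auto simp: bounded_clinear_def clinear_linear)

lemmas bounded_clinear_add = clinear_add[OF bounded_clinear_clinear]
lemmas bounded_clinear_scaleC = clinear_scaleC[OF bounded_clinear_clinear]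
lemmas bounded_clinear_zero = clinear_zero[OF bounded_clinear_clinear]
lemmas bounded_clinear_minus = clinear_minus[OF bounded_clinear_clinear]
lemmas bounded_clinear_diff = clinear_diff[OF bounded_clinear_clinear]
lemmas bounded_clinear_sum = clinear_sum[OF bounded_clinear_clinear]

lemma bounded_clinear_cont: "bounded_clinear f \<Longrightarrow> (g \<longlongrightarrow> l) F \<Longrightarrow> ((\<lambda>x. f (g x)) \<longlongrightarrow> f l) F"
  using bounded_linear.tendsto[OF bounded_clinear_linear] by blast

lemma bounded_clinear_continuous: "bounded_clinear f \<Longrightarrow> continuous_on S f"
  using bounded_linear.continuous_on[OF bounded_clinear_linear, of f S "\<lambda>x. x"] continuous_on_id
  by blast

lemma bounded_clinear_id: "bounded_clinear (\<lambda>x. x)"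
  by (intro bounded_clinearI[where K=1] clinearI) auto

lemma bounded_clinear_compose: "bounded_clinear f \<Longrightarrow> bounded_clinear g \<Longrightarrow> bounded_clinear (\<lambda>x. f (g x))"
proof -
  assume f: "bounded_clinear f" and g: "bounded_clinear g"
  obtain Kf where Kf: "\<forall>x. norm (f x) \<le> norm x * Kf" "Kf > 0" using bounded_clinear_bound[OF f] by auto
  obtain Kg where Kg: "\<forall>x. norm (g x) \<le> norm x * Kg" "Kg > 0" using bounded_clinear_bound[OF g] by auto
  show ?thesis
  proof (rule bounded_clinearI[where K="Kg*Kf"])
    show "clinear (\<lambda>x. f (g x))"
      using f g by (intro clinearI) (auto simp: bounded_clinear_add bounded_clinear_scaleC)
    fix x
    have "norm (f (g x)) \<le> norm (g x) * Kf" using Kf by auto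
    also have "\<dots> \<le> norm x * Kg * Kf" using Kg Kf by (intro mult_right_mono) auto
    finally show "norm (f (g x)) \<le> norm x * (Kg * Kf)" by (simp add: mult.assoc)
  qed
qed

lemma bounded_clinear_compose': "bounded_clinear f \<Longrightarrow> bounded_clinear g \<Longrightarrow> bounded_clinear (f \<circ> g)"
  using bounded_clinear_compose[of f g] by (simp add: comp_def)

lemma bounded_clinear_funpow: fixes f :: "'a::complex_inner \<Rightarrow> 'a" shows "bounded_clinear f \<Longrightarrow> bounded_clinear (f ^^ n)"
proof (induct n)
  case 0
  have "(f^^0) = (\<lambda>x. x)" by auto
  then show ?case using bounded_clinear_id by metis
next
  case (Suc n) then show ?case using bounded_clinear_compose'[of f "f^^n"] by (simp add: o_def)
qed

lemma bounded_clinear_plus: "bounded_clinear f \<Longrightarrow> bounded_clinear g \<Longrightarrow> bounded_clinear (\<lambda>x. f x + g x)"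
proof -
  assume f: "bounded_clinear f" and g: "bounded_clinear g"
  obtain Kf where Kf: "\<forall>x. norm (f x) \<le> norm x * Kf" using bounded_clinear_bound[OF f] by auto
  obtain Kg where Kg: "\<forall>x. norm (g x) \<le> norm x * Kg" using bounded_clinear_bound[OF g] by auto
  show ?thesis
  proof (rule bounded_clinearI[where K="Kf+Kg"])
    show "clinear (\<lambda>x. f x + g x)"
      using f g by (intro clinearI) (auto simp: bounded_clinear_add bounded_clinear_scaleC scaleC_add_right)
    fix x
    have "norm (f x + g x) \<le> norm (f x) + norm (g x)" by (rule norm_triangle_ineq)
    also have "\<dots> \<le> norm x * Kf + norm x * Kg" using Kf Kg by (intro add_mono) auto
    finally show "norm (f x + g x) \<le> norm x * (Kf + Kg)" by (simp add: distrib_left)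
  qed
qed

lemma bounded_clinear_scaleC_op: "bounded_clinear f \<Longrightarrow> bounded_clinear (\<lambda>x. scaleC c (f x))"
proof -
  assume f: "bounded_clinear f"
  obtain Kf where Kf: "\<forall>x. norm (f x) \<le> norm x * Kf" using bounded_clinear_bound[OF f] by auto
  show ?thesis
  proof (rule bounded_clinearI[where K="cmod c * Kf"])
    show "clinear (\<lambda>x. scaleC c (f x))"
      using f by (intro clinearI) (auto simp: bounded_clinear_add bounded_clinear_scaleC scaleC_add_right scaleC_scaleC mult.commute)
    fix x
    show "norm (scaleC c (f x)) \<le> norm x * (cmod c * Kf)"
      using Kf mult_left_mono[of "norm (f x)" "norm x * Kf" "cmod c"] by (simp add: mult_ac)
  qed
qed

lemma bounded_clinear_minus_op: "bounded_clinear f \<Longrightarrow> bounded_clinear g \<Longrightarrow> bounded_clinear (\<lambda>x. f x - g x)"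
proof -
  assume f: "bounded_clinear f" and g: "bounded_clinear g"
  have "bounded_clinear (\<lambda>x. f x + scaleC (-1) (g x))"
    by (intro bounded_clinear_plus f bounded_clinear_scaleC_op g)
  then show ?thesis by (simp add: scaleC_minus_one)
qed

lemma bounded_clinear_scaleC_id: "bounded_clinear (\<lambda>x. scaleC c x)"
  using bounded_clinear_scaleC_op[OF bounded_clinear_id] .

lemma bounded_linear_scaleC_right: "bounded_linear (\<lambda>x::'a::complex_inner. scaleC a x)"
  using bounded_clinear_linear[OF bounded_clinear_scaleC_id] .

lemma bounded_linear_scaleC_left: "bounded_linear (\<lambda>a. scaleC a (x::'a::complex_inner))"
proof (rule bounded_linear_intro[where K="norm x"])
  show "scaleC (a + b) x = scaleC a x + scaleC b x" for a b by (rule scaleC_add_left)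
  show "scaleC (r *\<^sub>R a) x = r *\<^sub>R scaleC a x" for r a
    by (simp add: scaleR_scaleC scaleC_scaleC scaleR_conv_of_real)
  show "norm (scaleC a x) \<le> norm a * norm x" for a by simp
qed

lemma tendsto_scaleC [tendsto_intros]:
  fixes f :: "_ \<Rightarrow> complex" and g :: "_ \<Rightarrow> 'a::complex_inner"
  assumes "(f \<longlongrightarrow> a) F" "(g \<longlongrightarrow> b) F"
  shows "((\<lambda>x. scaleC (f x) (g x)) \<longlongrightarrow> scaleC a b) F"
proof -
  have "bounded_bilinear (\<lambda>a (x::'a). scaleC a x)"
  proof (rule bounded_bilinear.intro)
    show "scaleC (a + a') b = scaleC a b + scaleC a' b" for a a' b by (rule scaleC_add_left)
    show "scaleC a (b + b') = scaleC a b + scaleC a b'" for a b b' by (rule scaleC_add_right)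
    show "scaleC (r *\<^sub>R a) b = r *\<^sub>R scaleC a b" for r a b
      by (simp add: scaleR_scaleC scaleC_scaleC scaleR_conv_of_real)
    show "scaleC a (r *\<^sub>R b) = r *\<^sub>R scaleC a b" for r a b
      by (simp add: scaleR_scaleC scaleC_scaleC mult.commute)
    show "\<exists>K. \<forall>a b. norm (scaleC a (b::'a)) \<le> norm a * norm b * K"
      by (intro exI[of _ 1]) simp
  qed
  then show ?thesis using assms by (rule bounded_bilinear.tendsto)
qed

lemma cinner_bounded_bilinear_pre:
  "cinner (x + x') y = cinner x y + cinner x' y"
  "cinner x (y + y') = cinner x y + cinner x y'"
  "cinner (r *\<^sub>R x) y = r *\<^sub>R cinner x y"
  "cinner x (r *\<^sub>R y) = r *\<^sub>R cinner x y"
  by (simp_all add: cinner_add_left cinner_add_right scaleR_scaleC cinner_scaleC_left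
        cinner_scaleC_right scaleR_conv_of_real)


section \<open>Positive forms, Cauchy-Schwarz\<close>

definition nonneg_form :: "('a::complex_inner \<Rightarrow> 'a) \<Rightarrow> bool" where
  "nonneg_form S \<longleftrightarrow> (\<forall>x. Im (cinner (S x) x) = 0 \<and> 0 \<le> Re (cinner (S x) x))"

lemma nonneg_form_real: "nonneg_form S \<Longrightarrow> cinner (S x) x = complex_of_real (Re (cinner (S x) x))"
  by (simp add: nonneg_form_def complex_eq_iff)

lemma positive_op_nonneg_form: "positive_op S \<Longrightarrow> nonneg_form S"
  by (simp add: positive_op_def nonneg_form_def)

lemma positive_op_bcl: "positive_op S \<Longrightarrow> bounded_clinear S"
  by (simp add: positive_op_def)

lemma nonneg_form_selfadj:
  assumes S: "clinear S" and nn: "nonneg_form S"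
  shows "cinner (S x) y = cinner x (S y)"
proof -
  define h where "h x y = cinner (S x) y - cinner x (S y)" for x y
  have hxx: "h x x = 0" for x
  proof -
    have "cinner x (S x) = cnj (cinner (S x) x)" by (rule cinner_commute)
    also have "\<dots> = cinner (S x) x" using nonneg_form_real[OF nn, of x] by (metis complex_cnj_complex_of_real)
    finally show ?thesis by (simp add: h_def)
  qed
  have hadd: "h (u + v) (u + v) = h u u + h u v + h v u + h v v" for u v
    by (simp add: h_def clinear_add[OF S] cinner_add_left cinner_add_right algebra_simps)
  have hi: "h (u + scaleC \<i> v) (u + scaleC \<i> v) = h u u - \<i> * h u v + \<i> * h v u + h v v" for u v
    by (simp add: h_def clinear_add[OF S] clinear_scaleC[OF S] cinner_add_left cinner_add_right
        cinner_scaleC_left cinner_scaleC_right algebra_simps)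
  have 1: "h x y + h y x = 0" using hadd[of x y] hxx by simp
  have 2: "- \<i> * h x y + \<i> * h y x = 0" using hi[of x y] hxx by simp
  from 1 have 3: "h y x = - h x y" by (simp add: add_eq_0_iff)
  from 2 3 have "(-2 * \<i>) * h x y = 0" by (simp add: algebra_simps)
  then have "h x y = 0" by simp
  then show ?thesis by (simp add: h_def)
qed

lemma cs_arith:
  fixes a c :: real and b :: complex
  assumes H: "\<And>t. 0 \<le> a + 2 * Re (cnj t * b) + (cmod t)\<^sup>2 * c" and c: "0 \<le> c"
  shows "(cmod b)\<^sup>2 \<le> a * c"
proof (cases "c = 0")
  case True
  show ?thesis
  proof (rule ccontr)
    assume "\<not> ?thesis"
    then have b0: "b \<noteq> 0" using True by auto
    have a0: "0 \<le> a" using H[of 0] by simp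
    define r where "r = (a + 1) / (2 * (cmod b)\<^sup>2)"
    have bpos: "0 < (cmod b)\<^sup>2" using b0 by simp
    have "Re (cnj (- of_real r * b) * b) = - r * (cmod b)\<^sup>2"
      using cmod_power2[of b] by (simp add: power2_eq_square algebra_simps)
    then have "0 \<le> a - 2 * r * (cmod b)\<^sup>2" using H[of "- of_real r * b"] True by simp
    also have "2 * r * (cmod b)\<^sup>2 = a + 1" using bpos by (simp add: r_def)
    finally show False by simp
  qed
next
  case False
  then have cpos: "c > 0" using c by simp
  define t where "t = - b / of_real c"
  have 1: "Re (cnj t * b) = - (cmod b)\<^sup>2 / c"
    using cmod_power2[of b] cpos by (simp add: t_def power2_eq_square field_simps)
  have 2: "(cmod t)\<^sup>2 * c = (cmod b)\<^sup>2 / c"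
    using cpos by (simp add: t_def norm_divide power2_eq_square)
  have "0 \<le> a - (cmod b)\<^sup>2 / c" using H[of t] 1 2 by simp
  then have "(cmod b)\<^sup>2 / c \<le> a" by simp
  then show ?thesis using cpos by (simp add: divide_le_eq mult.commute)
qed

lemma nonneg_form_cs:
  assumes S: "clinear S" and nn: "nonneg_form S"
  shows "(cmod (cinner (S x) y))\<^sup>2 \<le> Re (cinner (S x) x) * Re (cinner (S y) y)"
proof (rule cs_arith)
  show "0 \<le> Re (cinner (S y) y)" using nn by (simp add: nonneg_form_def)
  fix t
  have sa: "cinner (S y) x = cnj (cinner (S x) y)"
    using nonneg_form_selfadj[OF S nn, of y x] cinner_commute[of y "S x"] by simp
  have "cinner (S (x + scaleC t y)) (x + scaleC t y)
      = cinner (S x) x + cnj t * cinner (S x) y + t * cinner (S y) x + t * cnj t * cinner (S y) y"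
    by (simp add: clinear_add[OF S] clinear_scaleC[OF S] cinner_add_left cinner_add_right
        cinner_scaleC_left cinner_scaleC_right algebra_simps)
  also have "\<dots> = cinner (S x) x + (cnj t * cinner (S x) y + cnj (cnj t * cinner (S x) y))
       + of_real ((cmod t)\<^sup>2) * cinner (S y) y"
    using complex_norm_square[of t] by (simp add: sa mult.commute)
  finally have "Re (cinner (S (x + scaleC t y)) (x + scaleC t y))
     = Re (cinner (S x) x) + 2 * Re (cnj t * cinner (S x) y) + (cmod t)\<^sup>2 * Re (cinner (S y) y)"
    by simp
  moreover have "0 \<le> Re (cinner (S (x + scaleC t y)) (x + scaleC t y))"
    using nn by (simp add: nonneg_form_def)
  ultimately show "0 \<le> Re (cinner (S x) x) + 2 * Re (cnj t * cinner (S x) y) + (cmod t)\<^sup>2 * Re (cinner (S y) y)"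
    by simp
qed

lemma nonneg_form_id: "nonneg_form (\<lambda>x::'a::complex_inner. x)"
  by (simp add: nonneg_form_def cinner_self)

lemma clinear_id: "clinear (\<lambda>x. x)"
  by (simp add: clinear_def)

lemma cauchy_schwarz: "cmod (cinner x y) \<le> norm x * norm y"
proof -
  have "(cmod (cinner x y))\<^sup>2 \<le> (norm x)\<^sup>2 * (norm y)\<^sup>2"
    using nonneg_form_cs[OF clinear_id nonneg_form_id, of x y] by (simp add: norm_sq_cinner)
  then have "(cmod (cinner x y))\<^sup>2 \<le> (norm x * norm y)\<^sup>2" by (simp add: power_mult_distrib)
  then show ?thesis by (rule power2_le_imp_le) simp
qed

lemma nonneg_form_zero:
  assumes S: "clinear S" and nn: "nonneg_form S" and z: "Re (cinner (S x) x) = 0"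
  shows "S x = 0"
proof -
  have "(cmod (cinner (S x) (S x)))\<^sup>2 \<le> 0"
    using nonneg_form_cs[OF S nn, of x "S x"] z by simp
  then have "cinner (S x) (S x) = 0" by simp
  then show ?thesis by (simp add: cinner_eq_zero_iff)
qed

lemma cauchy_schwarz': "cmod (cinner x y) \<le> norm y * norm x"
  by (metis cauchy_schwarz mult.commute)

lemma bounded_linear_cinner_left: "bounded_linear (\<lambda>x. cinner x y)"
  by (rule bounded_linear_intro[where K="norm y"])
     (auto simp: cinner_bounded_bilinear_pre cauchy_schwarz)

lemma bounded_linear_cinner_right: "bounded_linear (\<lambda>y. cinner x y)"
  by (rule bounded_linear_intro[where K="norm x"])
     (auto simp: cinner_bounded_bilinear_pre cauchy_schwarz')

lemma tendsto_cinner [tendsto_intros]: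
  assumes "(f \<longlongrightarrow> a) F" "(g \<longlongrightarrow> b) F"
  shows "((\<lambda>x. cinner (f x) (g x)) \<longlongrightarrow> cinner a b) F"
proof -
  have "bounded_bilinear (cinner :: 'b::complex_inner \<Rightarrow> 'b \<Rightarrow> complex)"
    by (rule bounded_bilinear.intro) (auto simp: cinner_bounded_bilinear_pre cauchy_schwarz intro: exI[of _ 1])
  then show ?thesis using assms by (rule bounded_bilinear.tendsto)
qed


section \<open>Projection theorem\<close>

definition csubspace :: "'a::complex_inner set \<Rightarrow> bool" where
  "csubspace M \<longleftrightarrow> 0 \<in> M \<and> (\<forall>x\<in>M. \<forall>y\<in>M. x + y \<in> M) \<and> (\<forall>a. \<forall>x\<in>M. scaleC a x \<in> M)"

lemma csubspace_0: "csubspace M \<Longrightarrow> 0 \<in> M"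
  and csubspace_add: "csubspace M \<Longrightarrow> x \<in> M \<Longrightarrow> y \<in> M \<Longrightarrow> x + y \<in> M"
  and csubspace_scaleC: "csubspace M \<Longrightarrow> x \<in> M \<Longrightarrow> scaleC a x \<in> M"
  by (auto simp: csubspace_def)

lemma csubspace_minus: "csubspace M \<Longrightarrow> x \<in> M \<Longrightarrow> - x \<in> M"
  using csubspace_scaleC[of M x "-1"] by (simp add: scaleC_minus_one)

lemma csubspace_diff: "csubspace M \<Longrightarrow> x \<in> M \<Longrightarrow> y \<in> M \<Longrightarrow> x - y \<in> M"
  using csubspace_add[of M x "-y"] csubspace_minus[of M y] by simp

lemma csubspace_scaleR: "csubspace M \<Longrightarrow> x \<in> M \<Longrightarrow> scaleR r x \<in> M"
  by (simp add: scaleR_scaleC csubspace_scaleC)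

lemma csubspace_sum: "csubspace M \<Longrightarrow> (\<And>i. i \<in> S \<Longrightarrow> f i \<in> M) \<Longrightarrow> sum f S \<in> M"
  by (induct S rule: infinite_finite_induct) (auto simp: csubspace_0 csubspace_add)

lemma proj_exists:
  fixes x :: "'a::chilbert_space"
  assumes M: "csubspace M" "closed M"
  shows "\<exists>m\<in>M. \<forall>y\<in>M. cinner (x - m) y = 0"
proof -
  define D where "D = {norm (x - m) | m. m \<in> M}"
  define d where "d = Inf D"
  have Dne: "D \<noteq> {}" using csubspace_0[OF M(1)] by (auto simp: D_def)
  have Dbdd: "bdd_below D" by (auto simp: D_def intro!: bdd_belowI[of _ 0])
  have dle: "d \<le> norm (x - m)" if "m \<in> M" for m
    unfolding d_def by (rule cInf_lower) (use that Dbdd in \<open>auto simp: D_def\<close>)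
  have d0: "0 \<le> d" unfolding d_def by (rule cInf_greatest[OF Dne]) (auto simp: D_def)
  have "\<exists>m\<in>M. norm (x - m) < d + 1 / (real n + 1)" for n
  proof -
    have "Inf D < d + 1 / (real n + 1)" by (simp add: d_def)
    then obtain z where "z \<in> D" "z < d + 1 / (real n + 1)"
      using cInf_less_iff[OF Dne Dbdd] by blast
    then show ?thesis by (auto simp: D_def)
  qed
  then obtain mm where mmM: "\<And>n. mm n \<in> M" and mmd: "\<And>n. norm (x - mm n) < d + 1 / (real n + 1)"
    by metis
  define C where "C = 2 * d + 1"
  have C0: "0 < C" using d0 by (simp add: C_def)
  have sq: "(norm (x - mm n))\<^sup>2 \<le> d\<^sup>2 + C / (real n + 1)" for n
  proof -
    have e: "0 < 1 / (real n + 1)" "1 / (real n + 1) \<le> 1" by (auto simp: field_simps)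
    have "(norm (x - mm n))\<^sup>2 \<le> (d + 1 / (real n + 1))\<^sup>2"
      using mmd[of n] dle[OF mmM[of n]] d0 by (intro power_mono) auto
    also have "\<dots> = d\<^sup>2 + (2 * d + 1 / (real n + 1)) * (1 / (real n + 1))"
      by (simp add: power2_eq_square algebra_simps)
    also have "\<dots> \<le> d\<^sup>2 + C * (1 / (real n + 1))"
      using e d0 by (intro add_left_mono mult_right_mono) (auto simp: C_def)
    finally show ?thesis by simp
  qed
  have mid: "(norm (mm n - mm k))\<^sup>2 \<le> 2 * C / (real n + 1) + 2 * C / (real k + 1)" for n k
  proof -
    define u where "u = x - mm n"
    define v where "v = x - mm k"
    define c where "c = scaleR (1/2) (mm n + mm k)"
    have cM: "c \<in> M" unfolding c_def
      by (intro csubspace_scaleR[OF M(1)] csubspace_add[OF M(1)] mmM)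
    have "u + v = scaleR 2 (x - c)" by (simp add: u_def v_def c_def algebra_simps scaleR_2)
    then have "(norm (u + v))\<^sup>2 = 4 * (norm (x - c))\<^sup>2" by (simp add: power2_eq_square)
    moreover have "d\<^sup>2 \<le> (norm (x - c))\<^sup>2" using dle[OF cM] d0 by (intro power_mono) auto
    moreover have "u - v = mm k - mm n" by (simp add: u_def v_def)
    moreover note parallelogram[of u v]
    moreover have "(norm u)\<^sup>2 \<le> d\<^sup>2 + C / (real n + 1)" "(norm v)\<^sup>2 \<le> d\<^sup>2 + C / (real k + 1)"
      using sq by (auto simp: u_def v_def)
    ultimately have "(norm (mm k - mm n))\<^sup>2 \<le> 2 * C / (real n + 1) + 2 * C / (real k + 1)"
      by simp
    then show ?thesis by (simp add: norm_minus_commute)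
  qed
  have "Cauchy mm"
  proof (rule metric_CauchyI)
    fix e :: real assume e: "0 < e"
    obtain N :: nat where N: "4 * C / e\<^sup>2 < real N" using reals_Archimedean2 by blast
    have N': "4 * C / (real N + 1) < e\<^sup>2"
      using N e C0 by (simp add: field_simps) (smt (verit) zero_less_power)
    show "\<exists>M. \<forall>m\<ge>M. \<forall>n\<ge>M. dist (mm m) (mm n) < e"
    proof (intro exI allI impI)
      fix m n assume mn: "N \<le> m" "N \<le> n"
      have a: "2 * C / (real m + 1) \<le> 2 * C / (real N + 1)"
        using mn C0 by (intro divide_left_mono) auto
      have b: "2 * C / (real n + 1) \<le> 2 * C / (real N + 1)"
        using mn C0 by (intro divide_left_mono) auto
      have "(dist (mm m) (mm n))\<^sup>2 \<le> 2 * C / (real N + 1) + 2 * C / (real N + 1)"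
        using mid[of m n] a b by (simp add: dist_norm)
      also have "\<dots> = 4 * C / (real N + 1)" by simp
      also have "\<dots> < e\<^sup>2" by (rule N')
      finally show "dist (mm m) (mm n) < e"
        using e by (meson power_less_imp_less_base less_le_not_le zero_le_dist)
    qed
  qed
  then obtain m where mlim: "mm \<longlonglongrightarrow> m" using Cauchy_convergent_iff convergent_def by blast
  have mM: "m \<in> M" using closed_sequentially[OF M(2) mmM mlim] .
  have "(\<lambda>n. norm (x - mm n)) \<longlonglongrightarrow> norm (x - m)"
    by (intro tendsto_intros mlim)
  moreover have "(\<lambda>n. norm (x - mm n)) \<longlonglongrightarrow> d"
  proof (rule real_tendsto_sandwich[where f="\<lambda>n. d" and h="\<lambda>n. d + 1 / (real n + 1)"])
    show "\<forall>\<^sub>F n in sequentially. d \<le> norm (x - mm n)" using dle mmM by auto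
    show "\<forall>\<^sub>F n in sequentially. norm (x - mm n) \<le> d + 1 / (real n + 1)"
      using mmd by (intro always_eventually allI less_imp_le)
    show "(\<lambda>n. d) \<longlonglongrightarrow> d" by simp
    show "(\<lambda>n. d + 1 / (real n + 1)) \<longlonglongrightarrow> d"
      using tendsto_add[OF tendsto_const[of d] LIMSEQ_inverse_real_of_nat]
      by (simp add: inverse_eq_divide add.commute)
  qed
  ultimately have md: "norm (x - m) = d" by (rule LIMSEQ_unique)
  show ?thesis
  proof (intro bexI[OF _ mM] ballI)
    fix y assume yM: "y \<in> M"
    define w where "w = x - m"
    have "(cmod (cinner w y))\<^sup>2 \<le> 0 * (norm y)\<^sup>2"
    proof (rule cs_arith)
      fix t
      have "m + scaleC (- t) y \<in> M" using mM yM M(1) by (intro csubspace_add csubspace_scaleC)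
      then have "d\<^sup>2 \<le> (norm (x - (m + scaleC (- t) y)))\<^sup>2" using dle d0 by (intro power_mono) auto
      also have "x - (m + scaleC (- t) y) = w + scaleC t y"
        by (simp add: w_def scaleC_minus_left)
      also have "(norm (w + scaleC t y))\<^sup>2 = d\<^sup>2 + (cmod t)\<^sup>2 * (norm y)\<^sup>2 + 2 * Re (cnj t * cinner w y)"
        by (simp add: norm_add_sq md w_def cinner_scaleC_right power_mult_distrib)
      finally show "0 \<le> 0 + 2 * Re (cnj t * cinner w y) + (cmod t)\<^sup>2 * (norm y)\<^sup>2" by simp
    qed simp
    then show "cinner (x - m) y = 0" by (simp add: w_def)
  qed
qed

lemma proj_unique:
  assumes "csubspace M" "m \<in> M" "m' \<in> M" "\<forall>y\<in>M. cinner (x - m) y = 0" "\<forall>y\<in>M. cinner (x - m') y = 0"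
  shows "m = m'"
proof -
  have d: "m - m' \<in> M" using assms by (simp add: csubspace_diff)
  have "cinner (m - m') (m - m') = cinner (x - m') (m - m') - cinner (x - m) (m - m')"
    by (simp add: cinner_diff_left)
  also have "\<dots> = 0" using assms d by simp
  finally show ?thesis by (simp add: cinner_eq_zero_iff)
qed

lemma orth_proj:
  fixes x :: "'a::chilbert_space"
  assumes "csubspace M" "closed M"
  shows "orth_proj M x \<in> M" "\<And>y. y \<in> M \<Longrightarrow> cinner (x - orth_proj M x) y = 0"
proof -
  have "\<exists>!m. m \<in> M \<and> (\<forall>y\<in>M. cinner (x - m) y = 0)"
    using proj_exists[OF assms, of x] proj_unique[OF assms(1)] by blast
  then have "orth_proj M x \<in> M \<and> (\<forall>y\<in>M. cinner (x - orth_proj M x) y = 0)"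
    unfolding orth_proj_def by (rule theI')
  then show "orth_proj M x \<in> M" "\<And>y. y \<in> M \<Longrightarrow> cinner (x - orth_proj M x) y = 0" by auto
qed

lemma orth_proj_eqI:
  fixes x :: "'a::chilbert_space"
  assumes "csubspace M" "closed M" "m \<in> M" "\<And>y. y \<in> M \<Longrightarrow> cinner (x - m) y = 0"
  shows "orth_proj M x = m"
  using proj_unique[OF assms(1) orth_proj(1)[OF assms(1,2)] assms(3)] orth_proj(2)[OF assms(1,2)] assms(4)
  by blast

lemma orth_proj_id:
  fixes x :: "'a::chilbert_space"
  assumes "csubspace M" "closed M" "x \<in> M"
  shows "orth_proj M x = x"
  by (rule orth_proj_eqI[OF assms]) simp

lemma orth_proj_clinear:
  fixes M :: "'a::chilbert_space set"
  assumes M: "csubspace M" "closed M"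
  shows "clinear (orth_proj M)"
proof (rule clinearI)
  fix x y :: 'a
  show "orth_proj M (x + y) = orth_proj M x + orth_proj M y"
  proof (rule orth_proj_eqI[OF M])
    show "orth_proj M x + orth_proj M y \<in> M" using orth_proj(1)[OF M] M(1) by (simp add: csubspace_add)
    fix z assume "z \<in> M"
    have e: "x + y - (orth_proj M x + orth_proj M y) = (x - orth_proj M x) + (y - orth_proj M y)" by simp
    show "cinner (x + y - (orth_proj M x + orth_proj M y)) z = 0"
      unfolding e cinner_add_left using orth_proj(2)[OF M \<open>z\<in>M\<close>] by simp
  qed
next
  fix a and x :: 'a
  show "orth_proj M (scaleC a x) = scaleC a (orth_proj M x)"
  proof (rule orth_proj_eqI[OF M])
    show "scaleC a (orth_proj M x) \<in> M" using orth_proj(1)[OF M] M(1) by (simp add: csubspace_scaleC)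
    fix z assume "z \<in> M"
    have e: "scaleC a x - scaleC a (orth_proj M x) = scaleC a (x - orth_proj M x)" by (simp add: scaleC_diff_right)
    show "cinner (scaleC a x - scaleC a (orth_proj M x)) z = 0"
      unfolding e cinner_scaleC_left using orth_proj(2)[OF M \<open>z\<in>M\<close>] by simp
  qed
qed

lemma orth_proj_pyth:
  fixes x :: "'a::chilbert_space"
  assumes M: "csubspace M" "closed M"
  shows "(norm x)\<^sup>2 = (norm (orth_proj M x))\<^sup>2 + (norm (x - orth_proj M x))\<^sup>2"
proof -
  have "x = orth_proj M x + (x - orth_proj M x)" by simp
  then have "(norm x)\<^sup>2 = (norm (orth_proj M x + (x - orth_proj M x)))\<^sup>2" by simp
  also have "\<dots> = (norm (orth_proj M x))\<^sup>2 + (norm (x - orth_proj M x))\<^sup>2 + 2 * Re (cinner (orth_proj M x) (x - orth_proj M x))"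
    by (rule norm_add_sq)
  also have "cinner (orth_proj M x) (x - orth_proj M x) = cnj (cinner (x - orth_proj M x) (orth_proj M x))"
    by (rule cinner_commute)
  also have "\<dots> = 0" using orth_proj[OF M] by simp
  finally show ?thesis by simp
qed

lemma orth_proj_norm:
  fixes x :: "'a::chilbert_space"
  assumes M: "csubspace M" "closed M"
  shows "norm (orth_proj M x) \<le> norm x"
proof -
  have "(norm (orth_proj M x))\<^sup>2 \<le> (norm x)\<^sup>2" using orth_proj_pyth[OF M, of x] by simp
  then show ?thesis by (rule power2_le_imp_le) simp
qed

lemma orth_proj_bcl:
  fixes M :: "'a::chilbert_space set"
  assumes M: "csubspace M" "closed M"
  shows "bounded_clinear (orth_proj M)"
  by (rule bounded_clinearI[where K=1]) (auto simp: orth_proj_clinear[OF M] orth_proj_norm[OF M])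

lemma orth_proj_selfadj:
  fixes x y :: "'a::chilbert_space"
  assumes M: "csubspace M" "closed M"
  shows "cinner (orth_proj M x) y = cinner x (orth_proj M y)"
proof -
  let ?P = "orth_proj M"
  have 1: "cinner (?P x) y = cinner (?P x) (?P y)"
  proof -
    have "cinner (?P x) (y - ?P y) = cnj (cinner (y - ?P y) (?P x))" by (rule cinner_commute)
    also have "\<dots> = 0" using orth_proj[OF M] by simp
    finally show ?thesis by (simp add: cinner_diff_right)
  qed
  have 2: "cinner x (?P y) = cinner (?P x) (?P y)"
    using orth_proj(2)[OF M orth_proj(1)[OF M, of y], of x] by (simp add: cinner_diff_left)
  show ?thesis using 1 2 by simp
qed

lemma orth_proj_zero_iff:
  fixes x :: "'a::chilbert_space"
  assumes M: "csubspace M" "closed M"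
  shows "orth_proj M x = 0 \<longleftrightarrow> (\<forall>y\<in>M. cinner x y = 0)"
proof
  assume P0: "orth_proj M x = 0"
  show "\<forall>y\<in>M. cinner x y = 0"
  proof
    fix y assume "y \<in> M"
    from orth_proj(2)[OF M this, of x] show "cinner x y = 0" using P0 by simp
  qed
next
  assume "\<forall>y\<in>M. cinner x y = 0"
  then show "orth_proj M x = 0" by (intro orth_proj_eqI[OF M csubspace_0[OF M(1)]]) auto
qed

section \<open>Riesz representation and adjoints\<close>

lemma riesz:
  fixes f :: "'a::chilbert_space \<Rightarrow> complex"
  assumes add: "\<And>x y. f (x + y) = f x + f y" and sc: "\<And>a x. f (scaleC a x) = a * f x"
    and bd: "\<And>x. cmod (f x) \<le> norm x * K"
  shows "\<exists>z. \<forall>x. f x = cinner x z"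
proof (cases "\<forall>x. f x = 0")
  case True then show ?thesis by (intro exI[of _ 0]) simp
next
  case False
  then obtain u where u: "f u \<noteq> 0" by auto
  have bl: "bounded_linear f"
    by (rule bounded_linear_intro[where K=K]) (auto simp: add bd sc[of "complex_of_real _", folded scaleR_scaleC] scaleR_conv_of_real)
  define N where "N = {x. f x = 0}"
  have Nc: "closed N" unfolding N_def
    by (intro closed_Collect_eq bounded_linear.continuous_on[OF bl] continuous_on_id continuous_on_const)
  have f0: "f 0 = 0" using sc[of 0 0] by simp
  have Ns: "csubspace N" by (auto simp: csubspace_def N_def add sc f0)
  define w where "w = u - orth_proj N u"
  have wperp: "\<And>y. y \<in> N \<Longrightarrow> cinner w y = 0" using orth_proj(2)[OF Ns Nc] by (simp add: w_def)
  have fw: "f w = f u"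
  proof -
    have "orth_proj N u \<in> N" by (rule orth_proj(1)[OF Ns Nc])
    then have "f (orth_proj N u) = 0" by (simp add: N_def)
    moreover have "f w + f (orth_proj N u) = f u" using add[of w "orth_proj N u"] by (simp add: w_def)
    ultimately show ?thesis by simp
  qed
  have w0: "w \<noteq> 0" using fw u f0 by auto
  have nw: "cinner w w \<noteq> 0" using w0 by (simp add: cinner_eq_zero_iff)
  define z where "z = scaleC (cnj (f w) / cnj (cinner w w)) w"
  show ?thesis
  proof (intro exI allI)
    fix x
    define v where "v = scaleC (f w) x - scaleC (f x) w"
    have "v = scaleC (f w) x + scaleC (- f x) w" by (simp add: v_def scaleC_minus_left)
    then have "f v = f w * f x + (- f x) * f w" by (simp add: add sc)
    then have "v \<in> N" by (simp add: N_def)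
    then have "cinner v w = 0" using wperp[of v] by (simp add: cinner_commute[of v w])
    then have "f w * cinner x w = f x * cinner w w"
      by (simp add: v_def cinner_diff_left cinner_scaleC_left)
    then have "f x = f w * cinner x w / cinner w w" using nw by (simp add: field_simps)
    also have "\<dots> = cinner x z"
      by (simp add: z_def cinner_scaleC_right)
    finally show "f x = cinner x z" .
  qed
qed

lemma adjoint_exists:
  fixes S :: "'a::chilbert_space \<Rightarrow> 'a"
  assumes S: "bounded_clinear S"
  shows "\<exists>R. \<forall>x y. cinner (S x) y = cinner x (R y)"
proof -
  obtain K where K: "\<And>x. norm (S x) \<le> norm x * K" "K > 0" using bounded_clinear_bound[OF S] by auto
  have "\<exists>z. \<forall>x. cinner (S x) y = cinner x z" for y
  proof (rule riesz[where K="K * norm y"])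
    show "cinner (S (x + x')) y = cinner (S x) y + cinner (S x') y" for x x'
      by (simp add: bounded_clinear_add[OF S] cinner_add_left)
    show "cinner (S (scaleC a x)) y = a * cinner (S x) y" for a x
      by (simp add: bounded_clinear_scaleC[OF S] cinner_scaleC_left)
    show "cmod (cinner (S x) y) \<le> norm x * (K * norm y)" for x
    proof -
      have "cmod (cinner (S x) y) \<le> norm (S x) * norm y" by (rule cauchy_schwarz)
      also have "\<dots> \<le> norm x * K * norm y" using K by (intro mult_right_mono) auto
      finally show ?thesis by (simp add: mult.assoc)
    qed
  qed
  then show ?thesis by metis
qed

lemma adjoint_eq:
  fixes S :: "'a::chilbert_space \<Rightarrow> 'a"
  assumes S: "bounded_clinear S"
  shows "cinner (S x) y = cinner x (adjoint S y)"
proof -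
  have "\<exists>!R. \<forall>x y. cinner (S x) y = cinner x (R y)"
  proof -
    obtain R where R: "\<forall>x y. cinner (S x) y = cinner x (R y)" using adjoint_exists[OF S] by blast
    moreover have "R' = R" if "\<forall>x y. cinner (S x) y = cinner x (R' y)" for R'
      using that R by (intro ext cinner_ext_right) metis
    ultimately show ?thesis by blast
  qed
  then have "\<forall>x y. cinner (S x) y = cinner x (adjoint S y)"
    unfolding adjoint_def by (rule theI')
  then show ?thesis by blast
qed

lemma adjoint_eq':
  fixes S :: "'a::chilbert_space \<Rightarrow> 'a"
  assumes S: "bounded_clinear S"
  shows "cinner (adjoint S x) y = cinner x (S y)"
  by (metis adjoint_eq[OF S] cinner_commute)

lemma adjoint_unique:
  fixes S :: "'a::chilbert_space \<Rightarrow> 'a"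
  assumes S: "bounded_clinear S" and R: "\<And>x y. cinner (S x) y = cinner x (R y)"
  shows "adjoint S = R"
  by (intro ext cinner_ext_right) (metis R adjoint_eq[OF S])

lemma adjoint_bcl:
  fixes S :: "'a::chilbert_space \<Rightarrow> 'a"
  assumes S: "bounded_clinear S"
  shows "bounded_clinear (adjoint S)"
proof -
  obtain K where K: "\<And>x. norm (S x) \<le> norm x * K" "K > 0" using bounded_clinear_bound[OF S] by auto
  show ?thesis
  proof (rule bounded_clinearI[where K=K])
    show "clinear (adjoint S)"
    proof (rule clinearI)
      show "adjoint S (x + y) = adjoint S x + adjoint S y" for x y
        by (rule cinner_ext_right) (simp add: adjoint_eq[OF S, symmetric] cinner_add_right)
      show "adjoint S (scaleC a x) = scaleC a (adjoint S x)" for a x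
        by (rule cinner_ext_right) (simp add: adjoint_eq[OF S, symmetric] cinner_scaleC_right)
    qed
    fix y
    have "(norm (adjoint S y))\<^sup>2 = Re (cinner (S (adjoint S y)) y)"
      by (simp add: norm_sq_cinner adjoint_eq[OF S])
    also have "\<dots> \<le> cmod (cinner (S (adjoint S y)) y)" by (rule complex_Re_le_cmod)
    also have "\<dots> \<le> norm (S (adjoint S y)) * norm y" by (rule cauchy_schwarz)
    also have "\<dots> \<le> norm (adjoint S y) * K * norm y" using K by (intro mult_right_mono) auto
    finally have "norm (adjoint S y) * norm (adjoint S y) \<le> norm (adjoint S y) * (K * norm y)"
      by (simp add: power2_eq_square mult.assoc)
    then show "norm (adjoint S y) \<le> norm y * K"
      using K(2) by (cases "norm (adjoint S y) = 0") (auto simp: mult.commute)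
  qed
qed

lemma adjoint_adjoint:
  fixes S :: "'a::chilbert_space \<Rightarrow> 'a"
  assumes S: "bounded_clinear S"
  shows "adjoint (adjoint S) = S"
  by (rule adjoint_unique[OF adjoint_bcl[OF S]]) (simp add: adjoint_eq'[OF S])

lemma adjoint_selfadj:
  fixes S :: "'a::chilbert_space \<Rightarrow> 'a"
  assumes S: "bounded_clinear S" and sa: "\<And>x y. cinner (S x) y = cinner x (S y)"
  shows "adjoint S = S"
  by (rule adjoint_unique[OF S sa])


section \<open>Square roots of positive operators\<close>

primrec sqit :: "('a::complex_inner \<Rightarrow> 'a) \<Rightarrow> nat \<Rightarrow> 'a \<Rightarrow> 'a" where
  "sqit B 0 = (\<lambda>x. 0)"
| "sqit B (Suc k) = (\<lambda>x. scaleR (1/2) (B x + sqit B k (sqit B k x)))"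

primrec sqq :: "nat \<Rightarrow> real" where
  "sqq 0 = 0"
| "sqq (Suc k) = (1 + (sqq k)\<^sup>2) / 2"

lemma sqq_bounds: "0 \<le> sqq k \<and> sqq k \<le> 1"
proof (induct k)
  case 0 then show ?case by simp
next
  case (Suc k)
  then have "(sqq k)\<^sup>2 \<le> 1" by (simp add: power_le_one)
  then show ?case using Suc by simp
qed

lemma sqq_mono: "sqq k \<le> sqq (Suc k)"
proof (induct k)
  case 0 then show ?case by simp
next
  case (Suc k)
  have "(sqq k)\<^sup>2 \<le> (sqq (Suc k))\<^sup>2" using Suc sqq_bounds[of k] by (intro power_mono) auto
  then show ?case by simp
qed

lemma sqq_incseq: "incseq sqq"
  using sqq_mono by (simp add: incseq_Suc_iff)

lemma sqq_convergent: "convergent sqq"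
proof -
  obtain L where "sqq \<longlonglongrightarrow> L" using incseq_convergent[OF sqq_incseq, of 1] sqq_bounds by blast
  then show ?thesis by (rule convergentI)
qed

lemma sqq_mono_le: "k \<le> m \<Longrightarrow> sqq k \<le> sqq m"
  using sqq_incseq by (simp add: incseq_def)

locale sqrt_setup =
  fixes B :: "'a::chilbert_space \<Rightarrow> 'a"
  assumes B_bcl: "bounded_clinear B"
    and B_sa: "\<And>x y. cinner (B x) y = cinner x (B y)"
    and B_norm: "\<And>x. norm (B x) \<le> norm x"
begin

abbreviation "Q k \<equiv> sqit B k"

lemma Q_bcl: "bounded_clinear (Q k)"
proof (induct k)
  case 0 then show ?case by (intro bounded_clinearI[where K=0] clinearI) auto
next
  case (Suc k)
  have "bounded_clinear (\<lambda>x. scaleC (complex_of_real (1/2)) (B x + Q k (Q k x)))"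
    by (rule bounded_clinear_scaleC_op, rule bounded_clinear_plus[OF B_bcl bounded_clinear_compose[OF Suc Suc]])
  then show ?case by (simp add: scaleR_scaleC)
qed

lemma Q_commute:
  assumes C: "clinear C" and CB: "\<And>x. C (B x) = B (C x)"
  shows "C (Q k x) = Q k (C x)"
proof (induct k arbitrary: x)
  case 0 then show ?case by (simp add: clinear_zero[OF C])
next
  case (Suc k)
  show ?case by (simp add: scaleR_scaleC clinear_scaleC[OF C] clinear_add[OF C] CB Suc)
qed

lemma Q_sa: "cinner (Q k x) y = cinner x (Q k y)"
proof (induct k arbitrary: x y)
  case 0 then show ?case by simp
next
  case (Suc k)
  show ?case by (simp add: scaleR_scaleC cinner_scaleC_left cinner_scaleC_right cinner_add_left
        cinner_add_right B_sa Suc)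
qed

lemma Q_bounds: "norm (Q k x) \<le> sqq k * norm x \<and> norm (Q (Suc k) x - Q k x) \<le> (sqq (Suc k) - sqq k) * norm x"
proof (induct k arbitrary: x)
  case 0
  show ?case using B_norm[of x] by simp
next
  case (Suc k)
  have a: "norm (Q k (Q k y)) \<le> (sqq k)\<^sup>2 * norm y" for y
  proof -
    have "norm (Q k (Q k y)) \<le> sqq k * norm (Q k y)" using Suc by blast
    also have "\<dots> \<le> sqq k * (sqq k * norm y)" using Suc sqq_bounds[of k] by (intro mult_left_mono) auto
    finally show ?thesis by (simp add: power2_eq_square mult.assoc)
  qed
  have n1: "norm (Q (Suc k) y) \<le> sqq (Suc k) * norm y" for y
  proof -
    have "norm (Q (Suc k) y) = (1/2) * norm (B y + Q k (Q k y))" by simp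
    also have "\<dots> \<le> (1/2) * (norm y + (sqq k)\<^sup>2 * norm y)"
      using norm_triangle_le[OF add_mono[OF B_norm[of y] a[of y]]] by simp
    also have "\<dots> = sqq (Suc k) * norm y" by (simp add: algebra_simps)
    finally show ?thesis .
  qed
  define d where "d = sqq (Suc k) - sqq k"
  have e1: "Q (Suc (Suc k)) x - Q (Suc k) x = scaleR (1/2) (Q (Suc k) (Q (Suc k) x) - Q k (Q k x))"
    by (simp only: sqit.simps(2)) (simp add: algebra_simps)
  have gen: "\<And>a b c::'a. a - c = (a - b) + (b - c)" by simp
  have e2: "Q (Suc k) (Q (Suc k) x) - Q k (Q k x) = Q (Suc k) (Q (Suc k) x - Q k x) + (Q (Suc k) (Q k x) - Q k (Q k x))"
    unfolding bounded_clinear_diff[OF Q_bcl] by (rule gen)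
  have eq: "Q (Suc (Suc k)) x - Q (Suc k) x = scaleR (1/2) (Q (Suc k) (Q (Suc k) x - Q k x) + (Q (Suc k) (Q k x) - Q k (Q k x)))"
    by (simp only: e1 e2)
  have b1: "norm (Q (Suc k) (Q (Suc k) x - Q k x)) \<le> sqq (Suc k) * (d * norm x)"
  proof -
    have "norm (Q (Suc k) (Q (Suc k) x - Q k x)) \<le> sqq (Suc k) * norm (Q (Suc k) x - Q k x)"
      using n1[of "Q (Suc k) x - Q k x"] by (simp add: n1)
    then show ?thesis using Suc[of x] sqq_bounds[of "Suc k"] d_def
      by (meson mult_left_mono order_trans)
  qed
  have b2: "norm (Q (Suc k) (Q k x) - Q k (Q k x)) \<le> d * (sqq k * norm x)"
  proof -
    have "norm (Q (Suc k) (Q k x) - Q k (Q k x)) \<le> d * norm (Q k x)" using Suc[of "Q k x"] d_def by simp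
    also have "\<dots> \<le> d * (sqq k * norm x)" using Suc[of x] sqq_mono[of k] d_def by (intro mult_left_mono) auto
    finally show ?thesis .
  qed
  have "norm (Q (Suc (Suc k)) x - Q (Suc k) x) \<le> (1/2) * (sqq (Suc k) * (d * norm x) + d * (sqq k * norm x))"
    unfolding eq using norm_triangle_le[OF add_mono[OF b1 b2]] by simp
  also have "\<dots> = (sqq (Suc (Suc k)) - sqq (Suc k)) * norm x"
    by (simp add: d_def power2_eq_square algebra_simps)
  finally show ?case using n1 by blast
qed

lemma Q_norm: "norm (Q k x) \<le> norm x"
proof -
  have "sqq k * norm x \<le> 1 * norm x" using sqq_bounds[of k] by (intro mult_right_mono) auto
  then show ?thesis using Q_bounds[of k x] by simp
qed

lemma Q_cauchy_bound: "k \<le> m \<Longrightarrow> norm (Q m x - Q k x) \<le> (sqq m - sqq k) * norm x"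
proof (induct m rule: dec_induct)
  case base then show ?case by simp
next
  case (step m)
  have "norm (Q (Suc m) x - Q k x) \<le> norm (Q (Suc m) x - Q m x) + norm (Q m x - Q k x)"
    using norm_triangle_ineq[of "Q (Suc m) x - Q m x" "Q m x - Q k x"] by simp
  also have "\<dots> \<le> (sqq (Suc m) - sqq m) * norm x + (sqq m - sqq k) * norm x"
    using Q_bounds[of m x] step by (intro add_mono) auto
  finally show ?case by (simp add: algebra_simps)
qed

lemma Q_Cauchy: "Cauchy (\<lambda>k. Q k x)"
proof (rule metric_CauchyI)
  fix e :: real assume e: "0 < e"
  have "Cauchy sqq" using sqq_convergent Cauchy_convergent_iff by blast
  moreover have "0 < e / (norm x + 1)" using e by (simp add: add_nonneg_pos)
  ultimately obtain N where N: "\<And>m n. m \<ge> N \<Longrightarrow> n \<ge> N \<Longrightarrow> dist (sqq m) (sqq n) < e / (norm x + 1)"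
    using metric_CauchyD by blast
  show "\<exists>M. \<forall>m\<ge>M. \<forall>n\<ge>M. dist (Q m x) (Q n x) < e"
  proof (intro exI allI impI)
    fix m n assume mn: "N \<le> m" "N \<le> n"
    have "dist (Q m x) (Q n x) \<le> \<bar>sqq m - sqq n\<bar> * norm x"
    proof (cases "n \<le> m")
      case True then show ?thesis using Q_cauchy_bound[of n m x] sqq_mono_le[of n m] by (simp add: dist_norm)
    next
      case False then show ?thesis using Q_cauchy_bound[of m n x] sqq_mono_le[of m n]
        by (simp add: dist_norm norm_minus_commute)
    qed
    also have "\<dots> \<le> e / (norm x + 1) * norm x"
      using N[OF mn] by (intro mult_right_mono) (auto simp: dist_real_def)
    also have "\<dots> < e"
    proof -
      have "norm x / (norm x + 1) < 1" using norm_ge_zero[of x] by (subst divide_less_eq_1_pos; linarith)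
      then have "e * (norm x / (norm x + 1)) < e * 1" using e by (intro mult_strict_left_mono) auto
      then show ?thesis by simp
    qed
    finally show "dist (Q m x) (Q n x) < e" .
  qed
qed

definition QQ :: "'a \<Rightarrow> 'a" where "QQ x = lim (\<lambda>k. Q k x)"

lemma QQ_lim: "(\<lambda>k. Q k x) \<longlonglongrightarrow> QQ x"
  unfolding QQ_def using Q_Cauchy[of x] Cauchy_convergent_iff convergent_LIMSEQ_iff by blast

lemma QQ_bcl: "bounded_clinear QQ"
proof (rule bounded_clinearI[where K=1])
  show "clinear QQ"
  proof (rule clinearI)
    fix x y
    have "(\<lambda>k. Q k (x + y)) \<longlonglongrightarrow> QQ x + QQ y"
      using tendsto_add[OF QQ_lim[of x] QQ_lim[of y]] by (simp add: bounded_clinear_add[OF Q_bcl])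
    then show "QQ (x + y) = QQ x + QQ y" using QQ_lim LIMSEQ_unique by blast
  next
    fix a x
    have "(\<lambda>k. Q k (scaleC a x)) \<longlonglongrightarrow> scaleC a (QQ x)"
      using tendsto_scaleC[OF tendsto_const QQ_lim[of x]] by (simp add: bounded_clinear_scaleC[OF Q_bcl])
    then show "QQ (scaleC a x) = scaleC a (QQ x)" using QQ_lim LIMSEQ_unique by blast
  qed
  fix x
  have "norm (QQ x) \<le> norm x"
    using tendsto_norm[OF QQ_lim[of x]] Q_norm by (intro LIMSEQ_le_const2) auto
  then show "norm (QQ x) \<le> norm x * 1" by simp
qed

lemma QQ_eq: "QQ x = scaleR (1/2) (B x + QQ (QQ x))"
proof -
  have 1: "(\<lambda>k. Q (Suc k) x) \<longlonglongrightarrow> QQ x" using QQ_lim[of x] by (rule LIMSEQ_Suc)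
  have 2: "(\<lambda>k. Q k (Q k x)) \<longlonglongrightarrow> QQ (QQ x)"
  proof -
    have a: "(\<lambda>k. Q k (Q k x) - Q k (QQ x)) \<longlonglongrightarrow> 0"
    proof (rule tendsto_norm_zero_cancel, rule real_tendsto_sandwich[where f="\<lambda>k. 0" and h="\<lambda>k. norm (Q k x - QQ x)"])
      show "\<forall>\<^sub>F k in sequentially. 0 \<le> norm (Q k (Q k x) - Q k (QQ x))" by simp
      show "\<forall>\<^sub>F k in sequentially. norm (Q k (Q k x) - Q k (QQ x)) \<le> norm (Q k x - QQ x)"
        using Q_norm by (simp add: bounded_clinear_diff[OF Q_bcl, symmetric])
      show "(\<lambda>k. 0) \<longlonglongrightarrow> 0" by simp
      show "(\<lambda>k. norm (Q k x - QQ x)) \<longlonglongrightarrow> 0"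
        using tendsto_norm_zero[OF LIM_zero[OF QQ_lim[of x]]] .
    qed
    have "(\<lambda>k. (Q k (Q k x) - Q k (QQ x)) + Q k (QQ x)) \<longlonglongrightarrow> 0 + QQ (QQ x)"
      by (intro tendsto_add a QQ_lim)
    then show ?thesis by simp
  qed
  have "(\<lambda>k. Q (Suc k) x) \<longlonglongrightarrow> scaleR (1/2) (B x + QQ (QQ x))"
    by (simp only: sqit.simps) (intro tendsto_scaleR tendsto_add tendsto_const 2)
  then show ?thesis using 1 LIMSEQ_unique by blast
qed

lemma QQ_sa: "cinner (QQ x) y = cinner x (QQ y)"
proof -
  have "(\<lambda>k. cinner (Q k x) y) \<longlonglongrightarrow> cinner (QQ x) y" by (intro tendsto_cinner QQ_lim tendsto_const)
  moreover have "(\<lambda>k. cinner x (Q k y)) \<longlonglongrightarrow> cinner x (QQ y)" by (intro tendsto_cinner QQ_lim tendsto_const)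
  ultimately show ?thesis using Q_sa LIMSEQ_unique by simp
qed

lemma QQ_norm: "norm (QQ x) \<le> norm x"
  using tendsto_norm[OF QQ_lim[of x]] Q_norm by (intro LIMSEQ_le_const2) auto

lemma QQ_commute:
  assumes C: "bounded_clinear C" and CB: "\<And>x. C (B x) = B (C x)"
  shows "C (QQ x) = QQ (C x)"
proof -
  have "(\<lambda>k. C (Q k x)) \<longlonglongrightarrow> C (QQ x)" by (rule bounded_clinear_cont[OF C QQ_lim])
  moreover have "(\<lambda>k. C (Q k x)) \<longlonglongrightarrow> QQ (C x)"
    using QQ_lim[of "C x"] Q_commute[OF bounded_clinear_clinear[OF C] CB] by simp
  ultimately show ?thesis using LIMSEQ_unique by blast
qed

definition S0 :: "'a \<Rightarrow> 'a" where "S0 x = x - QQ x"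

lemma S0_bcl: "bounded_clinear S0"
  unfolding S0_def by (intro bounded_clinear_minus_op bounded_clinear_id QQ_bcl)

lemma S0_sa: "cinner (S0 x) y = cinner x (S0 y)"
  by (simp add: S0_def cinner_diff_left cinner_diff_right QQ_sa)

lemma S0_nonneg: "nonneg_form S0"
  unfolding nonneg_form_def
proof
  fix x
  have im: "Im (cinner (S0 x) x) = 0"
  proof -
    have "cinner (S0 x) x = cnj (cinner (S0 x) x)" using S0_sa[of x x] cinner_commute[of x "S0 x"] by simp
    then have "Im (cinner (S0 x) x) = Im (cnj (cinner (S0 x) x))" by simp
    then show ?thesis by simp
  qed
  have "Re (cinner (QQ x) x) \<le> cmod (cinner (QQ x) x)" by (rule complex_Re_le_cmod)
  also have "\<dots> \<le> norm (QQ x) * norm x" by (rule cauchy_schwarz)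
  also have "\<dots> \<le> norm x * norm x" using QQ_norm by (intro mult_right_mono) auto
  finally have "0 \<le> Re (cinner (S0 x) x)"
    by (simp add: S0_def cinner_diff_left norm_sq_cinner[symmetric] power2_eq_square)
  then show "Im (cinner (S0 x) x) = 0 \<and> 0 \<le> Re (cinner (S0 x) x)" using im by simp
qed

lemma S0_sq: "S0 (S0 x) = x - B x"
proof -
  have "S0 (S0 x) = x - QQ x - QQ x + QQ (QQ x)"
    by (simp add: S0_def bounded_clinear_diff[OF QQ_bcl])
  also have "QQ (QQ x) = scaleR 2 (QQ x) - B x"
  proof -
    have "scaleR 2 (QQ x) = scaleR 2 (scaleR (1/2) (B x + QQ (QQ x)))" using QQ_eq[of x] by simp
    also have "\<dots> = B x + QQ (QQ x)" by simp
    finally show ?thesis by simp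
  qed
  finally show ?thesis by (simp add: scaleR_2)
qed

lemma S0_commute:
  assumes C: "bounded_clinear C" and CB: "\<And>x. C (B x) = B (C x)"
  shows "C (S0 x) = S0 (C x)"
  by (simp add: S0_def bounded_clinear_diff[OF C] QQ_commute[OF C CB])

end

lemma positive_sa:
  fixes S :: "'a::complex_inner \<Rightarrow> 'a"
  shows "positive_op S \<Longrightarrow> cinner (S x) y = cinner x (S y)"
  by (rule nonneg_form_selfadj[OF bounded_clinear_clinear[OF positive_op_bcl] positive_op_nonneg_form])

lemma sqrt_unique_aux:
  fixes S S' :: "'a::chilbert_space \<Rightarrow> 'a"
  assumes S: "positive_op S" and S': "positive_op S'" and eq: "\<And>x. S (S x) = S' (S' x)"
    and comm: "\<And>x. S (S' x) = S' (S x)"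
  shows "S x = S' x"
proof -
  have Sb: "bounded_clinear S" and S'b: "bounded_clinear S'" using S S' by (auto simp: positive_op_def)
  define D where "D x = S x - S' x" for x
  have Dsa: "cinner (D x) y = cinner x (D y)" for x y
    by (simp add: D_def cinner_diff_left cinner_diff_right positive_sa[OF S] positive_sa[OF S'])
  have sum0: "S (D x) + S' (D x) = 0" for x
    by (simp add: D_def bounded_clinear_diff[OF Sb] bounded_clinear_diff[OF S'b] eq comm)
  have r1: "0 \<le> Re (cinner (S (D x)) (D x))" and r2: "0 \<le> Re (cinner (S' (D x)) (D x))"
    using S S' by (auto simp: positive_op_def)
  have "Re (cinner (S (D x)) (D x)) + Re (cinner (S' (D x)) (D x)) = 0"
    using arg_cong[OF sum0[of x], of "\<lambda>v. Re (cinner v (D x))"] by (simp add: cinner_add_left)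
  then have z1: "Re (cinner (S (D x)) (D x)) = 0" and z2: "Re (cinner (S' (D x)) (D x)) = 0"
    using r1 r2 by linarith+
  have "S (D x) = 0" by (rule nonneg_form_zero[OF bounded_clinear_clinear[OF Sb] positive_op_nonneg_form[OF S] z1])
  moreover have "S' (D x) = 0" by (rule nonneg_form_zero[OF bounded_clinear_clinear[OF S'b] positive_op_nonneg_form[OF S'] z2])
  ultimately have "D (D x) = 0" by (simp add: D_def)
  then have "cinner (D x) (D x) = 0" using Dsa[of "D x" x] by (simp add: cinner_commute[of x])
  then have "D x = 0" by (simp add: cinner_eq_zero_iff)
  then show ?thesis by (simp add: D_def)
qed

lemma sqrt_exists_unique:
  fixes A :: "'a::chilbert_space \<Rightarrow> 'a"
  assumes A: "positive_op A"
  shows "\<exists>!S. positive_op S \<and> S \<circ> S = A"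
proof -
  have Ab: "bounded_clinear A" using A by (simp add: positive_op_def)
  obtain K where K: "\<And>x. norm (A x) \<le> norm x * K" "K > 0" using bounded_clinear_bound[OF Ab] by auto
  define B where "B x = x - scaleC (complex_of_real (1/K)) (A x)" for x
  have Bb: "bounded_clinear B" unfolding B_def
    by (intro bounded_clinear_minus_op bounded_clinear_id bounded_clinear_scaleC_op Ab)
  have Bsa: "cinner (B x) y = cinner x (B y)" for x y
    by (simp add: B_def cinner_diff_left cinner_diff_right cinner_scaleC_left cinner_scaleC_right positive_sa[OF A])
  have Anf: "0 \<le> Re (cinner (A x) x)" "Im (cinner (A x) x) = 0" for x using A by (auto simp: positive_op_def)
  have Ale: "Re (cinner (A x) x) \<le> K * (norm x)\<^sup>2" for x
  proof -
    have "Re (cinner (A x) x) \<le> cmod (cinner (A x) x)" by (rule complex_Re_le_cmod)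
    also have "\<dots> \<le> norm (A x) * norm x" by (rule cauchy_schwarz)
    also have "\<dots> \<le> norm x * K * norm x" using K by (intro mult_right_mono) auto
    finally show ?thesis by (simp add: power2_eq_square mult_ac)
  qed
  have ReB: "Re (cinner (B x) x) = (norm x)\<^sup>2 - Re (cinner (A x) x) / K" for x
    by (simp add: B_def cinner_diff_left cinner_scaleC_left norm_sq_cinner)
  have ImB: "Im (cinner (B x) x) = 0" for x
    using Anf(2)[of x] by (simp add: B_def cinner_diff_left cinner_scaleC_left cinner_self)
  have Bnn: "nonneg_form B"
    unfolding nonneg_form_def
  proof
    fix x
    have "Re (cinner (A x) x) / K \<le> (norm x)\<^sup>2" using Ale[of x] K(2) by (simp add: divide_le_eq mult.commute)
    then show "Im (cinner (B x) x) = 0 \<and> 0 \<le> Re (cinner (B x) x)" using ReB[of x] ImB[of x] by simp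
  qed
  have Ble: "Re (cinner (B x) x) \<le> (norm x)\<^sup>2" for x
    using ReB[of x] Anf(1)[of x] K(2) by simp
  have Bnorm: "norm (B x) \<le> norm x" for x
  proof -
    have "(cmod (cinner (B x) (B x)))\<^sup>2 \<le> Re (cinner (B x) x) * Re (cinner (B (B x)) (B x))"
      by (rule nonneg_form_cs[OF bounded_clinear_clinear[OF Bb] Bnn])
    also have "\<dots> \<le> (norm x)\<^sup>2 * (norm (B x))\<^sup>2"
      using Ble[of x] Ble[of "B x"] Bnn by (intro mult_mono) (auto simp: nonneg_form_def)
    moreover have "cmod (cinner (B x) (B x)) = (norm (B x))\<^sup>2" by (simp add: cinner_self norm_power del: of_real_power)
    ultimately have h: "(norm (B x))\<^sup>2 * (norm (B x))\<^sup>2 \<le> (norm x)\<^sup>2 * (norm (B x))\<^sup>2"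
      by (simp only: power2_eq_square)
    have "(norm (B x))\<^sup>2 \<le> (norm x)\<^sup>2"
    proof (cases "norm (B x) = 0")
      case True then show ?thesis by simp
    next
      case False then have "0 < (norm (B x))\<^sup>2" by simp
      with h show ?thesis using mult_le_cancel_right_pos by blast
    qed
    then show ?thesis by (rule power2_le_imp_le) simp
  qed
  interpret sq: sqrt_setup B using Bb Bsa Bnorm by unfold_locales auto
  define S where "S x = scaleC (complex_of_real (sqrt K)) (sq.S0 x)" for x
  have Sb: "bounded_clinear S" unfolding S_def by (intro bounded_clinear_scaleC_op sq.S0_bcl)
  have Spos: "positive_op S"
    unfolding positive_op_def
  proof (intro conjI Sb allI)
    fix x
    have "cinner (S x) x = complex_of_real (sqrt K) * cinner (sq.S0 x) x" by (simp add: S_def cinner_scaleC_left)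
    then show "Im (cinner (S x) x) = 0" "0 \<le> Re (cinner (S x) x)"
      using sq.S0_nonneg K(2) by (auto simp: nonneg_form_def)
  qed
  have SS: "S (S x) = A x" for x
  proof -
    have "S (S x) = scaleC (complex_of_real (sqrt K) * complex_of_real (sqrt K)) (sq.S0 (sq.S0 x))"
      by (simp add: S_def bounded_clinear_scaleC[OF sq.S0_bcl] scaleC_scaleC)
    also have "complex_of_real (sqrt K) * complex_of_real (sqrt K) = complex_of_real K"
      using K(2) by (simp flip: of_real_mult)
    also have "sq.S0 (sq.S0 x) = scaleC (complex_of_real (1/K)) (A x)" by (simp add: sq.S0_sq B_def)
    also have "scaleC (complex_of_real K) (scaleC (complex_of_real (1/K)) (A x)) = A x"
      using K(2) by (simp add: scaleC_scaleC scaleC_one flip: of_real_mult)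
    finally show ?thesis .
  qed
  have uniq: "S' = S" if S': "positive_op S'" "S' \<circ> S' = A" for S'
  proof
    fix x
    have S'b: "bounded_clinear S'" using S' by (simp add: positive_op_def)
    have S'A: "S' (A y) = A (S' y)" for y using S'(2) by (metis comp_apply)
    have S'B: "S' (B y) = B (S' y)" for y
      by (simp add: B_def bounded_clinear_diff[OF S'b] bounded_clinear_scaleC[OF S'b] S'A)
    have comm: "S' (S y) = S (S' y)" for y
      by (simp add: S_def bounded_clinear_scaleC[OF S'b] sq.S0_commute[OF S'b S'B])
    have eq: "S' (S' y) = S (S y)" for y using S'(2) SS by (metis comp_apply)
    show "S' x = S x" by (rule sqrt_unique_aux[OF S'(1) Spos eq comm])
  qed
  have "S \<circ> S = A" using SS by auto
  with Spos uniq show ?thesis by blast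
qed

lemma sqrt_op:
  fixes A :: "'a::chilbert_space \<Rightarrow> 'a"
  assumes A: "positive_op A"
  shows "positive_op (sqrt_op A)" "\<And>x. sqrt_op A (sqrt_op A x) = A x"
proof -
  have "positive_op (sqrt_op A) \<and> sqrt_op A \<circ> sqrt_op A = A"
    unfolding sqrt_op_def by (rule theI'[OF sqrt_exists_unique[OF A]])
  then show "positive_op (sqrt_op A)" "\<And>x. sqrt_op A (sqrt_op A x) = A x"
    by (auto simp: fun_eq_iff)
qed


section \<open>Uniform boundedness principle\<close>

lemma ubp:
  fixes F :: "'i \<Rightarrow> 'a::{real_normed_vector,complete_space} \<Rightarrow> 'b::real_normed_vector"
  assumes bl: "\<And>i. i \<in> I \<Longrightarrow> bounded_linear (F i)" and pb: "\<And>x. \<exists>B. \<forall>i\<in>I. norm (F i x) \<le> B"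
  shows "\<exists>C. \<forall>i\<in>I. \<forall>x. norm (F i x) \<le> C * norm x"
proof -
  define E where "E n = {x. \<forall>i\<in>I. norm (F i x) \<le> real n}" for n :: nat
  have cl: "closed (E n)" for n
  proof -
    have "E n = (\<Inter>i\<in>I. {x. norm (F i x) \<le> real n})" by (auto simp: E_def)
    also have "closed \<dots>"
    proof (rule closed_INT, rule ballI)
      fix i assume i: "i \<in> I"
      have "continuous_on UNIV (\<lambda>x. norm (F i x))"
        by (rule continuous_on_norm, rule bounded_linear.continuous_on[OF bl[OF i]], rule continuous_on_id)
      then show "closed {x. norm (F i x) \<le> real n}"
        by (rule closed_Collect_le) simp
    qed
    finally show ?thesis .
  qed
  have un: "\<Union>(range E) = UNIV"
  proof (rule sym, rule UNIV_eq_I)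
    fix x
    obtain B where B: "\<forall>i\<in>I. norm (F i x) \<le> B" using pb by blast
    have Bn: "B \<le> real (nat \<lceil>B\<rceil>)" by (rule real_nat_ceiling_ge)
    have "x \<in> E (nat \<lceil>B\<rceil>)" unfolding E_def
    proof (intro CollectI ballI)
      fix i assume "i \<in> I"
      then have "norm (F i x) \<le> B" using B by blast
      then show "norm (F i x) \<le> real (nat \<lceil>B\<rceil>)" using Bn by linarith
    qed
    then show "x \<in> \<Union>(range E)" by blast
  qed
  have "\<exists>n. interior (E n) \<noteq> {}"
  proof (rule ccontr)
    assume "\<not> ?thesis"
    have "euclidean interior_of \<Union>(range E) = {}"
    proof (rule Baire_category_alt)
      show "completely_metrizable_space (euclidean::'a topology) \<or> locally_compact_space (euclidean::'a topology) \<and> regular_space (euclidean::'a topology)"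
        using completely_metrizable_space_euclidean by blast
      show "countable (range E)" by simp
      fix T assume "T \<in> range E"
      then obtain m where "T = E m" by blast
      have c1: "closedin euclidean (E m)" using cl[of m] closed_closedin by blast
      have c2: "interior (E m) = {}" using \<open>\<not> (\<exists>n. interior (E n) \<noteq> {})\<close> by blast
      show "closedin euclidean T \<and> euclidean interior_of T = {}"
        using c1 c2 \<open>T = E m\<close> by simp
    qed
    then have "interior (UNIV::'a set) = {}" using un by simp
    then show False by simp
  qed
  then obtain n x0 where "x0 \<in> interior (E n)" by blast
  then obtain r where r: "r > 0" "ball x0 r \<subseteq> E n" using mem_interior by blast
  show ?thesis
  proof (intro exI[of _ "4 * real n / r"] ballI allI)
    fix i x assume i: "i \<in> I"
    interpret bl: bounded_linear "F i" by (rule bl[OF i])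
    show "norm (F i x) \<le> 4 * real n / r * norm x"
    proof (cases "x = 0")
      case True then show ?thesis by (simp add: bl.zero)
    next
      case False
      define t where "t = r / (2 * norm x)"
      have t: "t > 0" using r False by (simp add: t_def)
      define z where "z = x0 + scaleR t x"
      have "dist x0 z = r / 2" using False r by (simp add: z_def dist_norm t_def)
      then have "z \<in> E n" "x0 \<in> E n" using r by auto
      then have a: "norm (F i z) \<le> real n" "norm (F i x0) \<le> real n" using i by (auto simp: E_def)
      have "F i z - F i x0 = scaleR t (F i x)" by (simp add: z_def bl.add bl.scaleR)
      then have "t * norm (F i x) = norm (F i z - F i x0)" using t by simp
      also have "\<dots> \<le> norm (F i z) + norm (F i x0)" by (rule norm_triangle_ineq4)
      also have "\<dots> \<le> 2 * real n" using a by simp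
      finally have "t * norm (F i x) \<le> 2 * real n" .
      then have "norm (F i x) \<le> 2 * real n / t" using t by (simp add: field_simps)
      also have "2 * real n / t = 4 * real n / r * norm x" using r False by (simp add: t_def field_simps)
      finally show ?thesis .
    qed
  qed
qed


lemma csubspace_closure:
  fixes X :: "'a::complex_inner set"
  assumes X: "csubspace X"
  shows "csubspace (closure X)"
  unfolding csubspace_def
proof (intro conjI ballI allI)
  show "0 \<in> closure X" using csubspace_0[OF X] closure_subset by blast
  fix x y assume x: "x \<in> closure X" and y: "y \<in> closure X"
  obtain f where f: "\<forall>n. f n \<in> X" "f \<longlonglongrightarrow> x" using closure_sequential[THEN iffD1, OF x] by blast
  obtain g where g: "\<forall>n. g n \<in> X" "g \<longlonglongrightarrow> y" using closure_sequential[THEN iffD1, OF y] by blast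
  have "(\<lambda>n. f n + g n) \<longlonglongrightarrow> x + y" by (intro tendsto_add f g)
  moreover have "\<forall>n. f n + g n \<in> X" using f g X by (simp add: csubspace_add)
  ultimately show "x + y \<in> closure X" by (intro closure_sequential[THEN iffD2] exI conjI)
next
  fix a x assume x: "x \<in> closure X"
  obtain f where f: "\<forall>n. f n \<in> X" "f \<longlonglongrightarrow> x" using closure_sequential[THEN iffD1, OF x] by blast
  have "(\<lambda>n. scaleC a (f n)) \<longlonglongrightarrow> scaleC a x" by (intro tendsto_scaleC tendsto_const f)
  moreover have "\<forall>n. scaleC a (f n) \<in> X" using f X by (simp add: csubspace_scaleC)
  ultimately show "scaleC a x \<in> closure X" by (intro closure_sequential[THEN iffD2] exI conjI)
qed

lemma csubspace_range: "clinear f \<Longrightarrow> csubspace (range f)"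
  unfolding csubspace_def
proof (intro conjI ballI allI)
  assume f: "clinear f"
  show "0 \<in> range f" using clinear_zero[OF f] by (metis rangeI)
  fix x y assume "x \<in> range f" "y \<in> range f"
  then obtain u v where "x = f u" "y = f v" by blast
  then show "x + y \<in> range f" using clinear_add[OF f, of u v] by (metis rangeI)
next
  fix a x assume f: "clinear f" and "x \<in> range f"
  then obtain u where "x = f u" by blast
  then show "scaleC a x \<in> range f" using clinear_scaleC[OF f, of a u] by (metis rangeI)
qed

lemma adjoint_pow:
  fixes T :: "'a::chilbert_space \<Rightarrow> 'a"
  assumes T: "bounded_clinear T"
  shows "cinner ((T ^^ n) x) y = cinner x ((adjoint T ^^ n) y)"
proof (induct n arbitrary: y)
  case 0 then show ?case by simp
next
  case (Suc n)
  have "cinner ((T ^^ Suc n) x) y = cinner ((T ^^ n) x) (adjoint T y)" by (simp add: adjoint_eq[OF T])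
  also have "\<dots> = cinner x ((adjoint T ^^ n) (adjoint T y))" by (rule Suc)
  also have "(adjoint T ^^ n) (adjoint T y) = (adjoint T ^^ Suc n) y" by (simp add: funpow_swap1)
  finally show ?case .
qed

locale setting =
  fixes A T :: "'a::chilbert_space \<Rightarrow> 'a"
  assumes A_pos: "positive_op A" and A_nz: "A \<noteq> (\<lambda>x. 0)" and T_B: "T \<in> BAhalf A"
begin

abbreviation "S \<equiv> sqrt_op A"
abbreviation "M \<equiv> closure (range A)"
abbreviation "P \<equiv> orth_proj M"
abbreviation "Ts \<equiv> adjoint T"

lemma A_bcl: "bounded_clinear A" using A_pos by (simp add: positive_op_def)
lemma S_pos: "positive_op S" using sqrt_op(1)[OF A_pos] .
lemma S_bcl: "bounded_clinear S" using S_pos by (simp add: positive_op_def)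
lemma SS: "S (S x) = A x" using sqrt_op(2)[OF A_pos] .
lemma S_sa: "cinner (S x) y = cinner x (S y)" by (rule positive_sa[OF S_pos])
lemma A_sa: "cinner (A x) y = cinner x (A y)" by (rule positive_sa[OF A_pos])
lemma T_bcl: "bounded_clinear T" using T_B by (simp add: BAhalf_def)
lemma Ts_bcl: "bounded_clinear Ts" by (rule adjoint_bcl[OF T_bcl])
lemma T_range: "\<exists>w. Ts (S x) = S w"
  using T_B by (auto simp: BAhalf_def image_subset_iff)

lemma M_sub: "csubspace M"
  by (rule csubspace_closure[OF csubspace_range[OF bounded_clinear_clinear[OF A_bcl]]])
lemma M_closed: "closed M" by simp

lemmas MM = M_sub M_closed

lemma P_bcl: "bounded_clinear P" by (rule orth_proj_bcl[OF MM])
lemma P_M: "P x \<in> M" by (rule orth_proj(1)[OF MM])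
lemma P_id: "x \<in> M \<Longrightarrow> P x = x" by (rule orth_proj_id[OF MM])
lemma P_idem: "P (P x) = P x" by (rule P_id[OF P_M])
lemma P_sa: "cinner (P x) y = cinner x (P y)" by (rule orth_proj_selfadj[OF MM])

lemma null_S: "A x = 0 \<longleftrightarrow> S x = 0"
proof
  assume "A x = 0"
  then have "cinner (S x) (S x) = 0" using S_sa[of x "S x"] SS[of x] by simp
  then show "S x = 0" by (simp add: cinner_eq_zero_iff)
next
  assume "S x = 0" then have "S (S x) = 0" by (simp add: bounded_clinear_zero[OF S_bcl])
  then show "A x = 0" by (simp add: SS)
qed

lemma perpM: "(\<forall>m\<in>M. cinner y m = 0) \<longleftrightarrow> A y = 0"
proof
  assume h: "\<forall>m\<in>M. cinner y m = 0"
  have "A (A y) \<in> range A" by (rule rangeI)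
  then have "A (A y) \<in> M" by (rule subsetD[OF closure_subset])
  then have "cinner y (A (A y)) = 0" using h by blast
  then have "cinner (A y) (A y) = 0" using A_sa[of y "A y"] by simp
  then show "A y = 0" by (simp add: cinner_eq_zero_iff)
next
  assume Ay: "A y = 0"
  have "range A \<subseteq> {m. cinner y m = 0}"
  proof
    fix m assume "m \<in> range A"
    then obtain x where "m = A x" by blast
    then show "m \<in> {m. cinner y m = 0}" using A_sa[of y x] Ay by simp
  qed
  moreover have "closed {m. cinner y m = 0}"
    by (rule closed_Collect_eq, rule bounded_linear.continuous_on[OF bounded_linear_cinner_right], rule continuous_on_id, rule continuous_on_const)
  ultimately have "M \<subseteq> {m. cinner y m = 0}" by (rule closure_minimal)
  then show "\<forall>m\<in>M. cinner y m = 0" by blast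
qed

lemma P_zero: "P x = 0 \<longleftrightarrow> A x = 0"
  using orth_proj_zero_iff[OF MM] perpM by simp

lemma A_P: "A (P x) = A x"
proof -
  have "\<forall>m\<in>M. cinner (x - P x) m = 0" using orth_proj(2)[OF MM] by blast
  then have "A (x - P x) = 0" using perpM by blast
  then show ?thesis by (simp add: bounded_clinear_diff[OF A_bcl])
qed

lemma S_P: "S (P x) = S x"
proof -
  have "A (x - P x) = 0" using A_P by (simp add: bounded_clinear_diff[OF A_bcl])
  then have "S (x - P x) = 0" using null_S by blast
  then show ?thesis by (simp add: bounded_clinear_diff[OF S_bcl])
qed

lemma inM_iff: "z \<in> M \<longleftrightarrow> (\<forall>y. A y = 0 \<longrightarrow> cinner z y = 0)"
proof
  assume z: "z \<in> M"
  show "\<forall>y. A y = 0 \<longrightarrow> cinner z y = 0"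
  proof (intro allI impI)
    fix y assume "A y = 0"
    then have "cinner y z = 0" using perpM z by blast
    then show "cinner z y = 0" using cinner_commute[of z y] by simp
  qed
next
  assume h: "\<forall>y. A y = 0 \<longrightarrow> cinner z y = 0"
  define w where "w = z - P z"
  have "A w = 0" by (simp add: w_def bounded_clinear_diff[OF A_bcl] A_P)
  then have 1: "cinner z w = 0" using h by blast
  have 2: "cinner (P z) w = 0"
  proof -
    have "cinner w (P z) = 0" using orth_proj(2)[OF MM P_M] by (simp add: w_def)
    then show ?thesis using cinner_commute[of "P z" w] by simp
  qed
  have "cinner w w = cinner z w - cinner (P z) w" by (simp add: w_def cinner_diff_left)
  then have "cinner w w = 0" using 1 2 by simp
  then have "w = 0" by (simp add: cinner_eq_zero_iff)
  then show "z \<in> M" using P_M[of z] by (simp add: w_def)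
qed

lemma S_M: "S x \<in> M"
  unfolding inM_iff
proof (intro allI impI)
  fix y assume "A y = 0"
  then have "S y = 0" using null_S by blast
  then show "cinner (S x) y = 0" by (simp add: S_sa)
qed

lemma A_in_SM: "A x \<in> S ` M"
  using SS[of x] S_M[of x] by (metis image_eqI)

lemma M_sub_closure_SM: "M \<subseteq> closure (S ` M)"
proof -
  have "range A \<subseteq> S ` M" using A_in_SM by blast
  then show ?thesis by (rule closure_mono)
qed

lemma closure_range_S: "closure (range S) = M"
proof
  show "closure (range S) \<subseteq> M" using S_M by (intro closure_minimal) auto
  have "S ` M \<subseteq> range S" by blast
  then have "closure (S ` M) \<subseteq> closure (range S)" by (rule closure_mono)
  then show "M \<subseteq> closure (range S)" using M_sub_closure_SM by blast
qed

lemma T_null: "A z = 0 \<Longrightarrow> A (T z) = 0"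
proof -
  assume "A z = 0"
  then have Sz: "S z = 0" using null_S by blast
  have "cinner (S (T z)) y = 0" for y
  proof -
    obtain w where w: "Ts (S y) = S w" using T_range by blast
    have "cinner (S (T z)) y = cinner (T z) (S y)" by (rule S_sa)
    also have "\<dots> = cinner z (Ts (S y))" by (rule adjoint_eq[OF T_bcl])
    also have "\<dots> = cinner z (S w)" by (simp add: w)
    also have "\<dots> = cinner (S z) w" by (simp add: S_sa)
    finally show ?thesis using Sz by simp
  qed
  from this[of "S (T z)"] have "S (T z) = 0" by (simp add: cinner_eq_zero_iff)
  then show "A (T z) = 0" using null_S by blast
qed

lemma Ts_M:
  assumes m: "m \<in> M"
  shows "Ts m \<in> M"
  unfolding inM_iff
proof (intro allI impI)
  fix y assume Ay: "A y = 0"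
  from Ay have "A (T y) = 0" by (rule T_null)
  then have "cinner m (T y) = 0" using m inM_iff by blast
  then show "cinner (Ts m) y = 0" by (simp add: adjoint_eq'[OF T_bcl])
qed

lemma Ts_pow_M: "m \<in> M \<Longrightarrow> (Ts ^^ n) m \<in> M"
  by (induct n) (auto simp: Ts_M)

lemma PTP: "P (T (P x)) = P (T x)"
proof -
  have "A (x - P x) = 0" by (simp add: bounded_clinear_diff[OF A_bcl] A_P)
  then have "A (T (x - P x)) = 0" by (rule T_null)
  then have "P (T (x - P x)) = 0" using P_zero by blast
  then show ?thesis by (simp add: bounded_clinear_diff[OF T_bcl] bounded_clinear_diff[OF P_bcl])
qed

definition L :: "'a \<Rightarrow> 'a" where "L x = P (T (P x))"

lemma L_bcl: "bounded_clinear L"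
proof -
  have "bounded_clinear (\<lambda>x. P (T (P x)))"
    by (rule bounded_clinear_compose[OF P_bcl bounded_clinear_compose[OF T_bcl P_bcl]])
  then show ?thesis by (simp add: L_def[abs_def])
qed

lemma L_M: "L x \<in> M" by (simp add: L_def P_M)

lemma Lpow: "x \<in> M \<Longrightarrow> (L ^^ n) x = P ((T ^^ n) x)"
proof (induct n)
  case 0 then show ?case by (simp add: P_id)
next
  case (Suc n)
  have "(L ^^ Suc n) x = L ((L ^^ n) x)" by simp
  also have "\<dots> = L (P ((T ^^ n) x))" using Suc.hyps[OF Suc.prems] by simp
  also have "\<dots> = P (T (P (P ((T ^^ n) x))))" by (simp add: L_def)
  also have "\<dots> = P (T ((T ^^ n) x))" by (simp add: P_idem PTP)
  finally show ?case by simp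
qed

lemma Lpow_M: "x \<in> M \<Longrightarrow> (L ^^ n) x \<in> M"
  by (simp add: Lpow P_M)

lemma Lpow_inner: "y \<in> M \<Longrightarrow> z \<in> M \<Longrightarrow> cinner ((L ^^ n) y) z = cinner y ((Ts ^^ n) z)"
proof -
  assume y: "y \<in> M" and z: "z \<in> M"
  have "cinner ((L ^^ n) y) z = cinner (P ((T ^^ n) y)) z" by (simp add: Lpow y)
  also have "\<dots> = cinner ((T ^^ n) y) (P z)" by (rule P_sa)
  also have "\<dots> = cinner ((T ^^ n) y) z" by (simp add: P_id z)
  also have "\<dots> = cinner y ((Ts ^^ n) z)" by (rule adjoint_pow[OF T_bcl])
  finally show ?thesis .
qed

section \<open>The operator diamond\<close>

definition D0 :: "'a \<Rightarrow> 'a" where "D0 x = P (SOME w. Ts (S x) = S w)"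

lemma SD0: "S (D0 x) = Ts (S x)"
proof -
  have "Ts (S x) = S (SOME w. Ts (S x) = S w)" using T_range[of x] by (rule someI_ex)
  then show ?thesis by (simp add: D0_def S_P)
qed

lemma D0_M: "D0 x \<in> M" by (simp add: D0_def P_M)

lemma uniq_M_S: "w1 \<in> M \<Longrightarrow> w2 \<in> M \<Longrightarrow> S w1 = S w2 \<Longrightarrow> w1 = w2"
proof -
  assume w: "w1 \<in> M" "w2 \<in> M" "S w1 = S w2"
  define d where "d = w1 - w2"
  have dM: "d \<in> M" using w M_sub by (simp add: d_def csubspace_diff)
  have "S d = 0" using w by (simp add: d_def bounded_clinear_diff[OF S_bcl])
  then have "A d = 0" using null_S by blast
  then have "cinner d d = 0" using dM inM_iff by blast
  then show "w1 = w2" by (simp add: d_def cinner_eq_zero_iff)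
qed

lemma D0_clinear: "clinear D0"
proof (rule clinearI)
  fix x y
  show "D0 (x + y) = D0 x + D0 y"
    by (rule uniq_M_S[OF D0_M csubspace_add[OF M_sub D0_M D0_M]])
       (simp add: SD0 bounded_clinear_add[OF S_bcl] bounded_clinear_add[OF Ts_bcl])
next
  fix a x
  show "D0 (scaleC a x) = scaleC a (D0 x)"
    by (rule uniq_M_S[OF D0_M csubspace_scaleC[OF M_sub D0_M]])
       (simp add: SD0 bounded_clinear_scaleC[OF S_bcl] bounded_clinear_scaleC[OF Ts_bcl])
qed

lemma D0_weak: "\<exists>C. \<forall>x. cmod (cinner (D0 x) y) \<le> C * norm x"
proof -
  have "P y \<in> closure (range S)" using P_M closure_range_S by simp
  then obtain u where u: "\<forall>k. u k \<in> range S" "u \<longlonglongrightarrow> P y" using closure_sequential[THEN iffD1] by blast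
  have "\<forall>k. \<exists>w. u k = S w" using u(1) by blast
  then obtain z where z: "\<And>k. u k = S (z k)" by metis
  define phi where "phi k x = cinner x (S (T (z k)))" for k x
  have phi_eq: "phi k x = cinner (D0 x) (u k)" for k x
  proof -
    have "cinner (D0 x) (u k) = cinner (S (D0 x)) (z k)" by (simp add: z S_sa)
    also have "\<dots> = cinner (Ts (S x)) (z k)" by (simp add: SD0)
    also have "\<dots> = cinner (S x) (T (z k))" by (rule adjoint_eq'[OF T_bcl])
    also have "\<dots> = cinner x (S (T (z k)))" by (rule S_sa)
    finally show ?thesis by (simp add: phi_def)
  qed
  have lim: "(\<lambda>k. phi k x) \<longlonglongrightarrow> cinner (D0 x) (P y)" for x
    unfolding phi_eq by (intro tendsto_cinner tendsto_const u(2))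
  have "\<exists>C. \<forall>k\<in>UNIV. \<forall>x. norm (phi k x) \<le> C * norm x"
  proof (rule ubp)
    show "bounded_linear (phi k)" for k unfolding phi_def[abs_def] by (rule bounded_linear_cinner_left)
    fix x
    have "Bseq (\<lambda>k. phi k x)" using lim[of x] by (intro convergent_imp_Bseq convergentI)
    then obtain B where "\<forall>k. norm (phi k x) \<le> B" by (auto elim: BseqE)
    then show "\<exists>B. \<forall>k\<in>UNIV. norm (phi k x) \<le> B" by blast
  qed
  then obtain C where C: "\<And>k x. norm (phi k x) \<le> C * norm x" by blast
  have "cmod (cinner (D0 x) y) \<le> C * norm x" for x
  proof -
    have "cinner (D0 x) y = cinner (D0 x) (P y)"
      using P_sa[of "D0 x" y] P_id[OF D0_M] by simp
    moreover have "cmod (cinner (D0 x) (P y)) \<le> C * norm x"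
      using tendsto_norm[OF lim[of x]] C by (intro LIMSEQ_le_const2) auto
    ultimately show ?thesis by simp
  qed
  then show ?thesis by blast
qed

lemma D0_bcl: "bounded_clinear D0"
proof -
  define I where "I = {x::'a. norm x \<le> 1}"
  define F where "F x y = cinner y (D0 x)" for x y
  have "\<exists>C. \<forall>x\<in>I. \<forall>y. norm (F x y) \<le> C * norm y"
  proof (rule ubp)
    show "bounded_linear (F x)" for x unfolding F_def[abs_def] by (rule bounded_linear_cinner_left)
    fix y
    obtain C where C: "\<And>x. cmod (cinner (D0 x) y) \<le> C * norm x" using D0_weak[of y] by blast
    have "norm (F x y) \<le> \<bar>C\<bar>" if "x \<in> I" for x
    proof -
      have "norm (F x y) = cmod (cinner (D0 x) y)" by (simp add: F_def cinner_commute[of y])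
      also have "\<dots> \<le> C * norm x" by (rule C)
      also have "\<dots> \<le> \<bar>C\<bar> * 1" using that by (intro mult_mono) (auto simp: I_def)
      finally show ?thesis by simp
    qed
    then show "\<exists>B. \<forall>x\<in>I. norm (F x y) \<le> B" by blast
  qed
  then obtain C0 where C0: "\<And>x y. norm x \<le> 1 \<Longrightarrow> norm (F x y) \<le> C0 * norm y" by (auto simp: I_def)
  define C where "C = max C0 0"
  have C: "norm (F x y) \<le> C * norm y" if "norm x \<le> 1" for x y
  proof -
    have "C0 * norm y \<le> C * norm y" by (intro mult_right_mono) (auto simp: C_def)
    then show ?thesis using C0[OF that, of y] by linarith
  qed
  have C_nn: "0 \<le> C" by (simp add: C_def)
  have unit: "norm (D0 x) \<le> C" if "norm x \<le> 1" for x
  proof (cases "D0 x = 0")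
    case True then show ?thesis using C_nn by simp
  next
    case False
    have "(norm (D0 x))\<^sup>2 = norm (F x (D0 x))" by (simp add: F_def cinner_self norm_power del: of_real_power)
    also have "\<dots> \<le> C * norm (D0 x)" by (rule C[OF that])
    finally show ?thesis using False by (simp add: power2_eq_square)
  qed
  show ?thesis
  proof (rule bounded_clinearI[OF D0_clinear, where K=C])
    fix x
    show "norm (D0 x) \<le> norm x * C"
    proof (cases "x = 0")
      case True then show ?thesis by (simp add: clinear_zero[OF D0_clinear])
    next
      case False
      define x' where "x' = scaleC (complex_of_real (1 / norm x)) x"
      have "norm x' = 1" using False by (simp add: x'_def norm_divide)
      then have "norm (D0 x') \<le> C" by (intro unit) simp
      moreover have "D0 x = scaleC (complex_of_real (norm x)) (D0 x')"
        using False by (simp add: x'_def clinear_scaleC[OF D0_clinear] scaleC_scaleC scaleC_one flip: of_real_mult)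
      moreover have "norm x * norm (D0 x') \<le> norm x * C" using calculation(1) by (intro mult_left_mono) auto
      ultimately show ?thesis by simp
    qed
  qed
qed

lemma diamond_eq: "diamond A T = D0"
  unfolding diamond_def
proof (rule the_equality)
  show "bounded_clinear D0 \<and> Ts \<circ> S = S \<circ> D0 \<and> range D0 \<subseteq> closure (range S)"
    using D0_bcl SD0 D0_M closure_range_S by (auto simp: fun_eq_iff)
  fix R assume R: "bounded_clinear R \<and> Ts \<circ> S = S \<circ> R \<and> range R \<subseteq> closure (range S)"
  show "R = D0"
  proof
    fix x
    have "R x \<in> M" using R closure_range_S by auto
    moreover have "S (R x) = S (D0 x)" using R SD0 by (metis comp_apply)
    ultimately show "R x = D0 x" using uniq_M_S D0_M by blast
  qed
qed

lemma SD0_pow: "S ((D0 ^^ n) x) = (Ts ^^ n) (S x)"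
  by (induct n) (auto simp: SD0)

end


instance chilbert_space \<subseteq> banach ..

definition nrm :: "'a::complex_inner set \<Rightarrow> ('a \<Rightarrow> 'a) \<Rightarrow> real" where
  "nrm M K = Sup {norm (K x) | x. x \<in> M \<and> norm x = 1}"

definition opsM :: "'a::complex_inner set \<Rightarrow> ('a \<Rightarrow> 'a) \<Rightarrow> bool" where
  "opsM M K \<longleftrightarrow> bounded_clinear K \<and> (\<forall>x\<in>M. K x \<in> M)"

lemma opsM_bcl: "opsM M K \<Longrightarrow> bounded_clinear K" by (simp add: opsM_def)
lemma opsM_M: "opsM M K \<Longrightarrow> x \<in> M \<Longrightarrow> K x \<in> M" by (simp add: opsM_def)

locale hspace =
  fixes M :: "'a::chilbert_space set"
  assumes M_sub: "csubspace M" and M_closed: "closed M" and M_nz: "\<exists>x\<in>M. x \<noteq> 0"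
begin

lemma unit_ex: "\<exists>u\<in>M. norm u = 1"
proof -
  obtain x where x: "x \<in> M" "x \<noteq> 0" using M_nz by blast
  define u where "u = scaleC (complex_of_real (1 / norm x)) x"
  have "u \<in> M" using x M_sub by (simp add: u_def csubspace_scaleC)
  moreover have "norm u = 1" using x by (simp add: u_def norm_divide)
  ultimately show ?thesis by blast
qed

lemma nrm_facts:
  assumes K: "bounded_clinear K"
  shows "bdd_above {norm (K x) | x. x \<in> M \<and> norm x = 1}" "{norm (K x) | x. x \<in> M \<and> norm x = 1} \<noteq> {}"
proof -
  obtain C where C: "\<And>x. norm (K x) \<le> norm x * C" using bounded_clinear_bound[OF K] by blast
  show "bdd_above {norm (K x) | x. x \<in> M \<and> norm x = 1}"
  proof (rule bdd_aboveI[of _ C])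
    fix y assume "y \<in> {norm (K x) | x. x \<in> M \<and> norm x = 1}"
    then obtain x where "y = norm (K x)" "norm x = 1" by blast
    then show "y \<le> C" using C[of x] by simp
  qed
  show "{norm (K x) | x. x \<in> M \<and> norm x = 1} \<noteq> {}" using unit_ex by blast
qed

lemma nrm_unit: "bounded_clinear K \<Longrightarrow> u \<in> M \<Longrightarrow> norm u = 1 \<Longrightarrow> norm (K u) \<le> nrm M K"
  unfolding nrm_def by (rule cSup_upper) (auto intro: nrm_facts)

lemma nrm_bound:
  assumes K: "bounded_clinear K" and x: "x \<in> M"
  shows "norm (K x) \<le> nrm M K * norm x"
proof (cases "x = 0")
  case True then show ?thesis by (simp add: bounded_clinear_zero[OF K])
next
  case False
  define u where "u = scaleC (complex_of_real (1 / norm x)) x"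
  have uM: "u \<in> M" using x M_sub by (simp add: u_def csubspace_scaleC)
  have nu: "norm u = 1" using False by (simp add: u_def norm_divide)
  have "K x = scaleC (complex_of_real (norm x)) (K u)"
    using False by (simp add: u_def bounded_clinear_scaleC[OF K] scaleC_scaleC scaleC_one flip: of_real_mult)
  then have "norm (K x) = norm x * norm (K u)" by simp
  also have "\<dots> \<le> norm x * nrm M K" by (intro mult_left_mono nrm_unit[OF K uM nu]) simp
  finally show ?thesis by (simp add: mult.commute)
qed

lemma nrm_nonneg: "bounded_clinear K \<Longrightarrow> 0 \<le> nrm M K"
  using unit_ex nrm_unit by (meson norm_ge_zero order_trans)

lemma nrm_le:
  assumes K: "bounded_clinear K" and b: "\<And>x. x \<in> M \<Longrightarrow> norm (K x) \<le> c * norm x"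
  shows "nrm M K \<le> c"
  unfolding nrm_def
proof (rule cSup_least)
  show "{norm (K x) | x. x \<in> M \<and> norm x = 1} \<noteq> {}" using nrm_facts[OF K] by blast
  fix y assume "y \<in> {norm (K x) | x. x \<in> M \<and> norm x = 1}"
  then obtain x where "y = norm (K x)" "x \<in> M" "norm x = 1" by blast
  then show "y \<le> c" using b[of x] by simp
qed

lemma opsM_id: "opsM M (\<lambda>x. x)" by (simp add: opsM_def bounded_clinear_id)

lemma opsM_comp: "opsM M K \<Longrightarrow> opsM M K' \<Longrightarrow> opsM M (\<lambda>x. K (K' x))"
  by (simp add: opsM_def bounded_clinear_compose)

lemma opsM_funpow:
  assumes K: "opsM M K" shows "opsM M (K ^^ n)"
  unfolding opsM_def
proof (intro conjI)
  show "bounded_clinear (K ^^ n)" using K by (simp add: opsM_def bounded_clinear_funpow)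
  show "\<forall>x\<in>M. (K ^^ n) x \<in> M" using K by (induct n) (auto simp: opsM_def)
qed

lemma opsM_scaleC: "opsM M K \<Longrightarrow> opsM M (\<lambda>x. scaleC c (K x))"
  by (simp add: opsM_def bounded_clinear_scaleC_op csubspace_scaleC[OF M_sub])

lemma opsM_plus: "opsM M K \<Longrightarrow> opsM M K' \<Longrightarrow> opsM M (\<lambda>x. K x + K' x)"
  by (simp add: opsM_def bounded_clinear_plus csubspace_add[OF M_sub])

lemma opsM_minus: "opsM M K \<Longrightarrow> opsM M K' \<Longrightarrow> opsM M (\<lambda>x. K x - K' x)"
  by (simp add: opsM_def bounded_clinear_minus_op csubspace_diff[OF M_sub])

lemma opsM_zero: "opsM M (\<lambda>x. 0)"
  by (simp add: opsM_def csubspace_0[OF M_sub]) (intro bounded_clinearI[where K=0] clinearI; simp)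

lemma opsM_P: "opsM M (orth_proj M)"
  by (simp add: opsM_def orth_proj_bcl[OF M_sub M_closed] orth_proj(1)[OF M_sub M_closed])

lemma nrm_triangle:
  assumes "bounded_clinear K" "bounded_clinear K'"
  shows "nrm M K \<le> nrm M K' + nrm M (\<lambda>x. K x - K' x)"
proof (rule nrm_le[OF assms(1)])
  fix x assume x: "x \<in> M"
  have "norm (K x) \<le> norm (K' x) + norm (K x - K' x)" by (rule norm_triangle_sub)
  also have "\<dots> \<le> nrm M K' * norm x + nrm M (\<lambda>x. K x - K' x) * norm x"
    by (intro add_mono nrm_bound[OF assms(2) x] nrm_bound[OF bounded_clinear_minus_op[OF assms] x, simplified])
  finally show "norm (K x) \<le> (nrm M K' + nrm M (\<lambda>x. K x - K' x)) * norm x" by (simp add: algebra_simps)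
qed

section \<open>Neumann series\<close>

lemma pow_bound:
  assumes K: "opsM M K" and q: "0 \<le> q" and b: "\<And>x. x \<in> M \<Longrightarrow> norm (K x) \<le> q * norm x"
  shows "x \<in> M \<Longrightarrow> norm ((K ^^ n) x) \<le> q ^ n * norm x"
proof (induct n)
  case 0 then show ?case by simp
next
  case (Suc n)
  have "norm ((K ^^ Suc n) x) = norm (K ((K ^^ n) x))" by simp
  also have "\<dots> \<le> q * norm ((K ^^ n) x)" by (rule b[OF opsM_M[OF opsM_funpow[OF K] Suc.prems]])
  also have "\<dots> \<le> q * (q ^ n * norm x)" by (intro mult_left_mono Suc.hyps[OF Suc.prems] q)
  finally show ?case by (simp add: mult.assoc)
qed

lemma neumann:
  assumes K: "opsM M K" and q: "0 \<le> q" "q < 1" and b: "\<And>x. x \<in> M \<Longrightarrow> norm (K x) \<le> q * norm x"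
  shows "\<exists>R. opsM M R \<and> (\<forall>x\<in>M. R (x - K x) = x \<and> R x - K (R x) = x \<and> norm (R x) \<le> norm x / (1 - q)
           \<and> (\<lambda>n. (K ^^ n) x) sums R x)"
proof -
  let ?P = "orth_proj M"
  have Pb: "bounded_clinear ?P" and PM: "\<And>x. ?P x \<in> M" and Pid: "\<And>x. x \<in> M \<Longrightarrow> ?P x = x"
    using orth_proj_bcl[OF M_sub M_closed] orth_proj(1)[OF M_sub M_closed] orth_proj_id[OF M_sub M_closed] by auto
  have Kb: "bounded_clinear K" using K by (simp add: opsM_def)
  have Knb: "\<And>n. bounded_clinear (K ^^ n)" by (rule bounded_clinear_funpow[OF Kb])
  have geo: "summable (\<lambda>n. q ^ n * c)" for c using q by (intro summable_mult2 summable_geometric) simp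
  have summ: "summable (\<lambda>n. (K ^^ n) v)" "summable (\<lambda>n. norm ((K ^^ n) v))" if v: "v \<in> M" for v
  proof -
    have "\<forall>n. norm ((K ^^ n) v) \<le> q ^ n * norm v" using pow_bound[OF K q(1) b v] by blast
    then show "summable (\<lambda>n. norm ((K ^^ n) v))"
      by (intro summable_comparison_test[OF _ geo]) auto
    then show "summable (\<lambda>n. (K ^^ n) v)" by (rule summable_norm_cancel)
  qed
  have tozero: "(\<lambda>n. (K ^^ n) v) \<longlonglongrightarrow> 0" if v: "v \<in> M" for v
    using summ(1)[OF v] by (rule summable_LIMSEQ_zero)
  have tele: "(\<lambda>n. (K ^^ n) v - (K ^^ Suc n) v) sums v" if v: "v \<in> M" for v
    using telescope_sums'[OF tozero[OF v]] by simp
  define R where "R x = suminf (\<lambda>n. (K ^^ n) (?P x))" for x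
  have Rsums: "(\<lambda>n. (K ^^ n) x) sums R x" if "x \<in> M" for x
    using summable_sums[OF summ(1)[OF that]] by (simp add: R_def Pid[OF that])
  have Rlin: "clinear R"
  proof (rule clinearI)
    fix x y
    have "(\<lambda>n. (K ^^ n) (?P (x + y))) = (\<lambda>n. (K ^^ n) (?P x) + (K ^^ n) (?P y))"
      by (simp add: bounded_clinear_add[OF Pb] bounded_clinear_add[OF Knb])
    then show "R (x + y) = R x + R y"
      unfolding R_def using suminf_add[OF summ(1)[OF PM] summ(1)[OF PM]] by simp
  next
    fix a x
    have "(\<lambda>n. (K ^^ n) (?P (scaleC a x))) = (\<lambda>n. scaleC a ((K ^^ n) (?P x)))"
      by (simp add: bounded_clinear_scaleC[OF Pb] bounded_clinear_scaleC[OF Knb])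
    then show "R (scaleC a x) = scaleC a (R x)"
      unfolding R_def using bounded_linear.suminf[OF bounded_linear_scaleC_right summ(1)[OF PM]] by simp
  qed
  have Rnorm: "norm (R x) \<le> norm (?P x) / (1 - q)" for x
  proof -
    have "norm (R x) \<le> (\<Sum>n. norm ((K ^^ n) (?P x)))" unfolding R_def by (rule summable_norm[OF summ(2)[OF PM]])
    also have "\<dots> \<le> (\<Sum>n. q ^ n * norm (?P x))"
      by (intro suminf_le summ(2)[OF PM] geo pow_bound[OF K q(1) b PM])
    also have "\<dots> = norm (?P x) / (1 - q)"
      using q by (simp add: suminf_mult2[OF summable_geometric, symmetric] suminf_geometric divide_inverse mult.commute)
    finally show ?thesis .
  qed
  have Rbcl: "bounded_clinear R"
  proof (rule bounded_clinearI[OF Rlin, where K="1 / (1 - q)"])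
    fix x
    have "norm (R x) \<le> norm (?P x) / (1 - q)" by (rule Rnorm)
    also have "\<dots> \<le> norm x / (1 - q)" using q by (intro divide_right_mono orth_proj_norm[OF M_sub M_closed]) auto
    finally show "norm (R x) \<le> norm x * (1 / (1 - q))" by simp
  qed
  have RM: "R x \<in> M" if "x \<in> M" for x
  proof -
    have "(\<lambda>n. \<Sum>i<n. (K ^^ i) x) \<longlonglongrightarrow> R x" using Rsums[OF that] by (simp add: sums_def)
    moreover have "\<forall>n. (\<Sum>i<n. (K ^^ i) x) \<in> M"
      using opsM_M[OF opsM_funpow[OF K] that] by (auto intro: csubspace_sum[OF M_sub])
    ultimately show ?thesis using closed_sequentially[OF M_closed, of "\<lambda>n. \<Sum>i<n. (K ^^ i) x" "R x"] by blast
  qed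
  show ?thesis
  proof (intro exI conjI ballI)
    show "opsM M R" using Rbcl RM by (simp add: opsM_def)
    fix x assume x: "x \<in> M"
    show "(\<lambda>n. (K ^^ n) x) sums R x" by (rule Rsums[OF x])
    show "norm (R x) \<le> norm x / (1 - q)" using Rnorm[of x] by (simp add: Pid[OF x])
    have KR: "(\<lambda>n. (K ^^ Suc n) x) sums K (R x)"
      using bounded_linear.sums[OF bounded_clinear_linear[OF Kb] Rsums[OF x]] by simp
    have "(\<lambda>n. (K ^^ n) x - (K ^^ Suc n) x) sums (R x - K (R x))"
      by (intro sums_diff Rsums[OF x] KR)
    then show "R x - K (R x) = x" using tele[OF x] sums_unique2 by blast
    have Kx: "K x \<in> M" using opsM_M[OF K x] .
    have "(\<lambda>n. (K ^^ n) x - (K ^^ n) (K x)) sums (R x - R (K x))"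
      by (intro sums_diff Rsums[OF x] Rsums[OF Kx])
    moreover have sw: "\<And>n. (K ^^ n) (K x) = (K ^^ Suc n) x" by (simp add: funpow_swap1)
    ultimately have "(\<lambda>n. (K ^^ n) x - (K ^^ Suc n) x) sums (R x - R (K x))" by (simp only: sw)
    then have "R x - R (K x) = x" using tele[OF x] sums_unique2 by blast
    then show "R (x - K x) = x" by (simp add: clinear_diff[OF Rlin])
  qed
qed

lemma invertible_onI:
  assumes R1: "opsM M R1" and R2: "opsM M R2"
    and right: "\<And>x. x \<in> M \<Longrightarrow> E (R1 x) = x" and left: "\<And>x. x \<in> M \<Longrightarrow> R2 (E x) = x"
  shows "invertible_on M E"
proof -
  have eq: "R2 x = R1 x" if "x \<in> M" for x
    using left[OF opsM_M[OF R1 that]] right[OF that] by simp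
  have R2b: "bounded_clinear R2" using R2 by (simp add: opsM_def)
  obtain C where C: "\<And>x. norm (R2 x) \<le> norm x * C" using bounded_clinear_bound[OF R2b] by blast
  show ?thesis
    unfolding invertible_on_def
  proof (intro exI[of _ R2] conjI ballI allI)
    show "R2 ` M \<subseteq> M" using R2 by (auto simp: opsM_def)
    show "\<exists>K. \<forall>x\<in>M. norm (R2 x) \<le> norm x * K" using C by blast
    fix x assume x: "x \<in> M"
    show "R2 (E x) = x" by (rule left[OF x])
    show "E (R2 x) = x" using eq[OF x] right[OF x] by simp
  next
    fix x y assume "x \<in> M" "y \<in> M"
    show "R2 (x + y) = R2 x + R2 y" by (rule bounded_clinear_add[OF R2b])
  next
    fix a x assume "x \<in> M"
    show "R2 (scaleC a x) = scaleC a (R2 x)" by (rule bounded_clinear_scaleC[OF R2b])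
  qed
qed

lemma invertible_onD:
  assumes "invertible_on M E" and EM: "\<And>x. x \<in> M \<Longrightarrow> E x \<in> M"
  shows "\<exists>R. opsM M R \<and> (\<forall>x\<in>M. R (E x) = x \<and> E (R x) = x)"
proof -
  obtain R C where R: "R ` M \<subseteq> M" "\<forall>x\<in>M. \<forall>y\<in>M. R (x + y) = R x + R y"
      "\<forall>a. \<forall>x\<in>M. R (scaleC a x) = scaleC a (R x)" "\<forall>x\<in>M. norm (R x) \<le> norm x * C"
      "\<forall>x\<in>M. R (E x) = x \<and> E (R x) = x"
    using assms unfolding invertible_on_def by blast
  let ?P = "orth_proj M"
  have Pb: "bounded_clinear ?P" and PM: "\<And>x. ?P x \<in> M" and Pid: "\<And>x. x \<in> M \<Longrightarrow> ?P x = x"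
    using orth_proj_bcl[OF M_sub M_closed] orth_proj(1)[OF M_sub M_closed] orth_proj_id[OF M_sub M_closed] by auto
  define R' where "R' x = R (?P x)" for x
  have "bounded_clinear R'"
  proof (rule bounded_clinearI[where K="max C 0"])
    show "clinear R'"
      by (rule clinearI) (simp_all add: R'_def bounded_clinear_add[OF Pb] bounded_clinear_scaleC[OF Pb] R PM)
    fix x
    have "norm (R' x) \<le> norm (?P x) * C" using R(4) PM by (simp add: R'_def)
    also have "\<dots> \<le> norm (?P x) * max C 0" by (intro mult_left_mono) auto
    also have "\<dots> \<le> norm x * max C 0" by (intro mult_right_mono orth_proj_norm[OF M_sub M_closed]) auto
    finally show "norm (R' x) \<le> norm x * max C 0" .
  qed
  moreover have "\<forall>x\<in>M. R' x \<in> M" using R(1) PM by (auto simp: R'_def)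
  moreover have "\<forall>x\<in>M. R' (E x) = x \<and> E (R' x) = x"
  proof
    fix x assume x: "x \<in> M"
    have "E x \<in> M" using EM[OF x] .
    then show "R' (E x) = x \<and> E (R' x) = x" using R(5) x by (simp add: R'_def Pid)
  qed
  ultimately show ?thesis by (auto simp: opsM_def)
qed

end


declare scaleC_one[simp]

primrec Qp :: "complex \<Rightarrow> ('a::complex_inner \<Rightarrow> 'a) \<Rightarrow> nat \<Rightarrow> 'a \<Rightarrow> 'a" where
  "Qp l L 0 = (\<lambda>x. 0)"
| "Qp l L (Suc n) = (\<lambda>x. scaleC l (Qp l L n x) + (L ^^ n) x)"

locale opL = hspace +
  fixes L :: "'a::chilbert_space \<Rightarrow> 'a"
  assumes L_ops: "opsM M L"
begin

lemma L_bcl: "bounded_clinear L" using L_ops by (simp add: opsM_def)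
lemma L_M: "x \<in> M \<Longrightarrow> L x \<in> M" using L_ops by (simp add: opsM_def)
lemma Lp_bcl: "bounded_clinear (L ^^ n)" by (rule bounded_clinear_funpow[OF L_bcl])

definition E :: "complex \<Rightarrow> 'a \<Rightarrow> 'a" where "E l x = scaleC l x - L x"

lemma E_ops: "opsM M (E l)"
proof -
  have "opsM M (\<lambda>x. scaleC l x - L x)"
    by (rule opsM_minus[OF opsM_scaleC[OF opsM_id] L_ops])
  then show ?thesis by (simp add: E_def[abs_def])
qed

lemma E_bcl: "bounded_clinear (E l)" using E_ops by (simp add: opsM_def)

lemma Qp_ops: "opsM M (Qp l L n)"
proof (induct n)
  case 0 then show ?case by (simp add: opsM_zero)
next
  case (Suc n)
  have "opsM M (\<lambda>x. scaleC l (Qp l L n x) + (L ^^ n) x)"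
    by (rule opsM_plus[OF opsM_scaleC[OF Suc] opsM_funpow[OF L_ops]])
  then show ?case by simp
qed

lemma E_Qp: "E l (Qp l L n x) = scaleC (l ^ n) x - (L ^^ n) x"
proof (induct n)
  case 0 then show ?case by (simp add: E_def bounded_clinear_zero[OF L_bcl])
next
  case (Suc n)
  have "E l (Qp l L (Suc n) x) = scaleC l (E l (Qp l L n x)) + E l ((L ^^ n) x)"
    by (simp add: bounded_clinear_add[OF E_bcl] bounded_clinear_scaleC[OF E_bcl])
  also have "\<dots> = scaleC l (scaleC (l ^ n) x - (L ^^ n) x) + (scaleC l ((L ^^ n) x) - (L ^^ Suc n) x)"
    unfolding Suc by (simp add: E_def)
  also have "\<dots> = scaleC (l ^ Suc n) x - (L ^^ Suc n) x"
    by (simp add: scaleC_diff_right scaleC_scaleC)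
  finally show ?case .
qed

lemma Qp_E: "Qp l L n (E l x) = scaleC (l ^ n) x - (L ^^ n) x"
proof (induct n)
  case 0 then show ?case by simp
next
  case (Suc n)
  have "Qp l L (Suc n) (E l x) = scaleC l (Qp l L n (E l x)) + (L ^^ n) (E l x)" by simp
  also have "\<dots> = scaleC l (scaleC (l ^ n) x - (L ^^ n) x) + (scaleC l ((L ^^ n) x) - (L ^^ n) (L x))"
    unfolding Suc by (simp add: E_def bounded_clinear_diff[OF Lp_bcl] bounded_clinear_scaleC[OF Lp_bcl])
  also have "(L ^^ n) (L x) = (L ^^ Suc n) x" by (simp add: funpow_swap1)
  also have "scaleC l (scaleC (l ^ n) x - (L ^^ n) x) + (scaleC l ((L ^^ n) x) - (L ^^ Suc n) x)
      = scaleC (l ^ Suc n) x - (L ^^ Suc n) x"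
    by (simp add: scaleC_diff_right scaleC_scaleC)
  finally show ?case .
qed

lemma G3:
  assumes n: "n \<ge> 1" and big: "nrm M (L ^^ n) < cmod l ^ n"
  shows "invertible_on M (\<lambda>x. scaleC l x - L x)"
proof -
  have nn: "0 \<le> nrm M (L ^^ n)" by (rule nrm_nonneg[OF Lp_bcl])
  have l0: "l \<noteq> 0" using big nn n by (auto simp: power_0_left)
  have ln0: "l ^ n \<noteq> 0" using l0 by simp
  define c where "c = 1 / l ^ n"
  define K where "K x = scaleC c ((L ^^ n) x)" for x
  define q where "q = nrm M (L ^^ n) / cmod l ^ n"
  have lpos: "0 < cmod l ^ n" using l0 by simp
  have q: "0 \<le> q" "q < 1" using nn big lpos by (auto simp: q_def)
  have Kops: "opsM M K"
  proof -
    have "opsM M (\<lambda>x. scaleC c ((L ^^ n) x))" by (rule opsM_scaleC[OF opsM_funpow[OF L_ops]])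
    then show ?thesis by (simp add: K_def[abs_def])
  qed
  have Kb: "norm (K x) \<le> q * norm x" if "x \<in> M" for x
  proof -
    have "norm (K x) = norm ((L ^^ n) x) / cmod l ^ n" by (simp add: K_def c_def norm_divide norm_power)
    also have "\<dots> \<le> nrm M (L ^^ n) * norm x / cmod l ^ n"
      by (intro divide_right_mono nrm_bound[OF Lp_bcl that]) (use lpos in simp)
    finally show ?thesis by (simp add: q_def)
  qed
  obtain W where W: "opsM M W" "\<And>x. x \<in> M \<Longrightarrow> W (x - K x) = x" "\<And>x. x \<in> M \<Longrightarrow> W x - K (W x) = x"
    using neumann[OF Kops q Kb] by blast
  have Wb: "bounded_clinear W" using W(1) by (simp add: opsM_def)
  have cl: "c * l ^ n = 1" "l ^ n * c = 1" using ln0 by (simp_all add: c_def)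
  define R1 where "R1 x = Qp l L n (scaleC c (W x))" for x
  define R2 where "R2 x = W (scaleC c (Qp l L n x))" for x
  have R1ops: "opsM M R1"
  proof -
    have "opsM M (\<lambda>x. Qp l L n (scaleC c (W x)))" by (rule opsM_comp[OF Qp_ops opsM_scaleC[OF W(1)]])
    then show ?thesis by (simp add: R1_def[abs_def])
  qed
  have R2ops: "opsM M R2"
  proof -
    have "opsM M (\<lambda>x. W (scaleC c (Qp l L n x)))" by (rule opsM_comp[OF W(1) opsM_scaleC[OF Qp_ops]])
    then show ?thesis by (simp add: R2_def[abs_def])
  qed
  show ?thesis
  proof (rule invertible_onI[OF R1ops R2ops])
    fix x assume x: "x \<in> M"
    have "scaleC l (R1 x) - L (R1 x) = E l (R1 x)" by (simp add: E_def)
    also have "\<dots> = scaleC (l ^ n) (scaleC c (W x)) - (L ^^ n) (scaleC c (W x))"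
      by (simp add: R1_def E_Qp)
    also have "\<dots> = W x - K (W x)"
      by (simp add: scaleC_scaleC cl scaleC_one K_def bounded_clinear_scaleC[OF Lp_bcl])
    also have "\<dots> = x" by (rule W(3)[OF x])
    finally show "scaleC l (R1 x) - L (R1 x) = x" .
  next
    fix x assume x: "x \<in> M"
    have "R2 (scaleC l x - L x) = W (scaleC c (Qp l L n (E l x)))" by (simp add: R2_def E_def)
    also have "\<dots> = W (x - K x)"
      by (simp add: Qp_E scaleC_diff_right scaleC_scaleC cl scaleC_one K_def)
    also have "\<dots> = x" by (rule W(2)[OF x])
    finally show "R2 (scaleC l x - L x) = x" .
  qed
qed

lemma spec_bound:
  assumes "l \<in> spectrum_on M L" "n \<ge> 1"
  shows "cmod l ^ n \<le> nrm M (L ^^ n)"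
  using G3[OF assms(2)] assms(1) by (force simp: spectrum_on_def)

end


context opL
begin

definition good :: "complex \<Rightarrow> ('a \<Rightarrow> 'a) \<Rightarrow> bool" where
  "good \<mu> R \<longleftrightarrow> opsM M R \<and> (\<forall>x\<in>M. R (x - scaleC \<mu> (L x)) = x \<and> R x - scaleC \<mu> (L (R x)) = x)"

definition Rs :: "complex \<Rightarrow> 'a \<Rightarrow> 'a" where "Rs \<mu> = (SOME R. good \<mu> R)"

lemma good_ops: "good \<mu> R \<Longrightarrow> opsM M R" by (simp add: good_def)
lemma good_bcl: "good \<mu> R \<Longrightarrow> bounded_clinear R" by (simp add: good_def opsM_def)
lemma good_M: "good \<mu> R \<Longrightarrow> x \<in> M \<Longrightarrow> R x \<in> M" by (simp add: good_def opsM_def)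
lemma good_left: "good \<mu> R \<Longrightarrow> x \<in> M \<Longrightarrow> R (x - scaleC \<mu> (L x)) = x" by (simp add: good_def)
lemma good_right: "good \<mu> R \<Longrightarrow> x \<in> M \<Longrightarrow> R x - scaleC \<mu> (L (R x)) = x" by (simp add: good_def)

lemma good_unique:
  assumes "good \<mu> R" "good \<mu> R'" "x \<in> M"
  shows "R x = R' x"
proof -
  have "R' (R x - scaleC \<mu> (L (R x))) = R x" by (rule good_left[OF assms(2) good_M[OF assms(1,3)]])
  then show ?thesis using good_right[OF assms(1,3)] by simp
qed

lemma Rs_good: assumes "\<exists>R. good \<mu> R" shows "good \<mu> (Rs \<mu>)"
  unfolding Rs_def using someI_ex[OF assms] .

lemma good_0: "good 0 (\<lambda>x. x)"
  by (simp add: good_def opsM_id)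

lemma good_from_spec:
  assumes \<mu>: "\<mu> \<noteq> 0" and ns: "inverse \<mu> \<notin> spectrum_on M L"
  shows "\<exists>R. good \<mu> R"
proof -
  have "invertible_on M (E (inverse \<mu>))" using ns by (simp add: spectrum_on_def E_def[abs_def])
  then obtain R0 where R0: "opsM M R0" "\<And>x. x \<in> M \<Longrightarrow> R0 (E (inverse \<mu>) x) = x"
      "\<And>x. x \<in> M \<Longrightarrow> E (inverse \<mu>) (R0 x) = x"
    using invertible_onD[of "E (inverse \<mu>)"] opsM_M[OF E_ops] by blast
  have R0b: "bounded_clinear R0" using R0(1) by (simp add: opsM_def)
  define R where "R x = scaleC (inverse \<mu>) (R0 x)" for x
  have "good \<mu> R"
    unfolding good_def
  proof (intro conjI ballI)
    have "opsM M (\<lambda>x. scaleC (inverse \<mu>) (R0 x))" by (rule opsM_scaleC[OF R0(1)])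
    then show "opsM M R" by (simp add: R_def[abs_def])
    fix x assume x: "x \<in> M"
    have "x - scaleC \<mu> (L x) = scaleC \<mu> (E (inverse \<mu>) x)"
      using \<mu> by (simp add: E_def scaleC_diff_right scaleC_scaleC)
    then show "R (x - scaleC \<mu> (L x)) = x"
      using \<mu> by (simp add: R_def bounded_clinear_scaleC[OF R0b] R0(2)[OF x] scaleC_scaleC)
    have "R x - scaleC \<mu> (L (R x)) = E (inverse \<mu>) (R0 x)"
      using \<mu> by (simp add: R_def E_def bounded_clinear_scaleC[OF L_bcl] scaleC_scaleC)
    then show "R x - scaleC \<mu> (L (R x)) = x" using R0(3)[OF x] by simp
  qed
  then show ?thesis by blast
qed

lemma K_pow: "((\<lambda>v. scaleC \<mu> (L v)) ^^ n) x = scaleC (\<mu> ^ n) ((L ^^ n) x)"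
proof (induct n)
  case 0 then show ?case by simp
next
  case (Suc n)
  show ?case by (simp add: Suc bounded_clinear_scaleC[OF L_bcl] scaleC_scaleC)
qed

lemma good_small:
  assumes sm: "cmod \<mu> * nrm M L < 1"
  shows "\<exists>R. good \<mu> R \<and> (\<forall>x\<in>M. (\<lambda>n. scaleC (\<mu> ^ n) ((L ^^ n) x)) sums R x)"
proof -
  define K where "K v = scaleC \<mu> (L v)" for v
  have Kops: "opsM M K"
  proof -
    have "opsM M (\<lambda>v. scaleC \<mu> (L v))" by (rule opsM_scaleC[OF L_ops])
    then show ?thesis by (simp add: K_def[abs_def])
  qed
  have q: "0 \<le> cmod \<mu> * nrm M L" by (simp add: nrm_nonneg[OF L_bcl])
  have Kb: "norm (K x) \<le> (cmod \<mu> * nrm M L) * norm x" if "x \<in> M" for x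
    using nrm_bound[OF L_bcl that] by (simp add: K_def mult.assoc mult_left_mono)
  obtain R where R: "opsM M R" "\<forall>x\<in>M. R (x - K x) = x \<and> R x - K (R x) = x \<and> (\<lambda>n. (K ^^ n) x) sums R x"
    using neumann[OF Kops q sm Kb] by blast
  have Kp: "(K ^^ n) x = scaleC (\<mu> ^ n) ((L ^^ n) x)" for n x
    using K_pow[where \<mu>=\<mu> and n=n and x=x] by (simp add: K_def[abs_def])
  have "good \<mu> R" using R by (simp add: good_def K_def)
  moreover have "\<forall>x\<in>M. (\<lambda>n. scaleC (\<mu> ^ n) ((L ^^ n) x)) sums R x" using R(2) by (simp add: Kp)
  ultimately show ?thesis by blast
qed

lemma res_id:
  assumes R0: "good \<mu>0 R0" and R: "good \<mu> R" and x: "x \<in> M"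
  shows "R x - R0 x = scaleC (\<mu> - \<mu>0) (R (L (R0 x)))"
proof -
  define y where "y = R0 x"
  have yM: "y \<in> M" using good_M[OF R0 x] by (simp add: y_def)
  have Rb: "bounded_clinear R" by (rule good_bcl[OF R])
  have "x = y - scaleC \<mu>0 (L y)" using good_right[OF R0 x] by (simp add: y_def)
  also have "\<dots> = (y - scaleC \<mu> (L y)) + scaleC (\<mu> - \<mu>0) (L y)" by (simp add: scaleC_diff_left)
  finally have "R x = R (y - scaleC \<mu> (L y)) + scaleC (\<mu> - \<mu>0) (R (L y))"
    by (simp add: bounded_clinear_add[OF Rb] bounded_clinear_scaleC[OF Rb])
  also have "R (y - scaleC \<mu> (L y)) = y" by (rule good_left[OF R yM])
  finally show ?thesis by (simp add: y_def)
qed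

lemma loc_bound:
  assumes R0: "good \<mu>0 R0" and R: "good \<mu> R" and sm: "cmod (\<mu> - \<mu>0) * nrm M L * nrm M R0 \<le> 1/2"
  shows "nrm M R \<le> 2 * nrm M R0"
proof -
  have Rb: "bounded_clinear R" by (rule good_bcl[OF R])
  have R0b: "bounded_clinear R0" by (rule good_bcl[OF R0])
  have "nrm M R \<le> nrm M R0 + nrm M R / 2"
  proof (rule nrm_le[OF Rb])
    fix x assume x: "x \<in> M"
    have R0xM: "R0 x \<in> M" by (rule good_M[OF R0 x])
    have LM: "L (R0 x) \<in> M" by (rule L_M[OF R0xM])
    have "norm (R (L (R0 x))) \<le> nrm M R * (nrm M L * (nrm M R0 * norm x))"
    proof -
      have "norm (R (L (R0 x))) \<le> nrm M R * norm (L (R0 x))" by (rule nrm_bound[OF Rb LM])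
      also have "\<dots> \<le> nrm M R * (nrm M L * norm (R0 x))"
        by (intro mult_left_mono nrm_bound[OF L_bcl R0xM] nrm_nonneg[OF Rb])
      also have "\<dots> \<le> nrm M R * (nrm M L * (nrm M R0 * norm x))"
        by (intro mult_left_mono nrm_bound[OF R0b x] nrm_nonneg[OF Rb] nrm_nonneg[OF L_bcl])
      finally show ?thesis .
    qed
    then have "cmod (\<mu> - \<mu>0) * norm (R (L (R0 x))) \<le> cmod (\<mu> - \<mu>0) * (nrm M R * (nrm M L * (nrm M R0 * norm x)))"
      by (intro mult_left_mono) auto
    also have "\<dots> = (cmod (\<mu> - \<mu>0) * nrm M L * nrm M R0) * (nrm M R * norm x)" by (simp add: mult_ac)
    also have "\<dots> \<le> (1/2) * (nrm M R * norm x)"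
      by (intro mult_right_mono sm) (simp add: nrm_nonneg[OF Rb])
    finally have a: "cmod (\<mu> - \<mu>0) * norm (R (L (R0 x))) \<le> (1/2) * (nrm M R * norm x)" .
    have "norm (R x) \<le> norm (R0 x) + (1/2) * (nrm M R * norm x)"
      using norm_triangle_sub[of "R x" "R0 x"] a res_id[OF R0 R x] by simp
    also have "\<dots> \<le> nrm M R0 * norm x + (1/2) * (nrm M R * norm x)"
      by (intro add_right_mono nrm_bound[OF R0b x])
    finally show "norm (R x) \<le> (nrm M R0 + nrm M R / 2) * norm x" by (simp add: algebra_simps)
  qed
  then show ?thesis by simp
qed

lemma diff_bound:
  assumes R0: "good \<mu>0 R0" and R: "good \<mu> R" and sm: "cmod (\<mu> - \<mu>0) * nrm M L * nrm M R0 \<le> 1/2"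
    and x: "x \<in> M"
  shows "norm (R x - R0 x) \<le> cmod (\<mu> - \<mu>0) * (2 * nrm M R0 * nrm M L * nrm M R0) * norm x"
proof -
  have Rb: "bounded_clinear R" by (rule good_bcl[OF R])
  have R0b: "bounded_clinear R0" by (rule good_bcl[OF R0])
  have R0xM: "R0 x \<in> M" by (rule good_M[OF R0 x])
  have LM: "L (R0 x) \<in> M" by (rule L_M[OF R0xM])
  have "norm (R (L (R0 x))) \<le> nrm M R * norm (L (R0 x))" by (rule nrm_bound[OF Rb LM])
  also have "\<dots> \<le> (2 * nrm M R0) * (nrm M L * (nrm M R0 * norm x))"
  proof (intro mult_mono loc_bound[OF R0 R sm])
    show "norm (L (R0 x)) \<le> nrm M L * (nrm M R0 * norm x)"
      using nrm_bound[OF L_bcl R0xM] nrm_bound[OF R0b x] nrm_nonneg[OF L_bcl]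
      by (meson mult_left_mono order_trans)
  qed (auto simp: nrm_nonneg[OF R0b] nrm_nonneg[OF L_bcl])
  finally have "cmod (\<mu> - \<mu>0) * norm (R (L (R0 x))) \<le> cmod (\<mu> - \<mu>0) * ((2 * nrm M R0) * (nrm M L * (nrm M R0 * norm x)))"
    by (intro mult_left_mono) auto
  then show ?thesis by (simp add: res_id[OF R0 R x] mult_ac)
qed

end


context opL
begin

lemma coef:
  assumes x: "x \<in> M"
  shows "(deriv ^^ n) (\<lambda>\<mu>. cinner (Rs \<mu> x) y) 0 = fact n * cinner ((L ^^ n) x) y"
proof -
  define f where "f \<mu> = cinner (Rs \<mu> x) y" for \<mu>
  define c where "c n = cinner ((L ^^ n) x) y" for n
  define F where "F = Abs_fps c"
  define \<delta> where "\<delta> = 1 / (nrm M L + 1)"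
  have nL: "0 \<le> nrm M L" by (rule nrm_nonneg[OF L_bcl])
  have \<delta>: "\<delta> > 0" using nL by (simp add: \<delta>_def)
  have ser: "(\<lambda>n. c n * z ^ n) sums f z" if z: "z \<in> ball 0 \<delta>" for z
  proof -
    have "cmod z * nrm M L \<le> \<delta> * nrm M L" using z nL by (intro mult_right_mono) auto
    also have "\<delta> * nrm M L < 1" using nL by (simp add: \<delta>_def field_simps)
    finally have sm: "cmod z * nrm M L < 1" .
    obtain R where R: "good z R" "\<forall>x\<in>M. (\<lambda>n. scaleC (z ^ n) ((L ^^ n) x)) sums R x"
      using good_small[OF sm] by blast
    have "Rs z x = R x" using good_unique[OF Rs_good R(1) x] R(1) by blast
    moreover have "(\<lambda>n. cinner (scaleC (z ^ n) ((L ^^ n) x)) y) sums cinner (R x) y"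
      using bounded_linear.sums[OF bounded_linear_cinner_left R(2)[rule_format, OF x]] .
    ultimately show ?thesis by (simp add: f_def c_def cinner_scaleC_left mult.commute)
  qed
  define z0 where "z0 = complex_of_real (\<delta> / 2)"
  have z0: "z0 \<in> ball 0 \<delta>" using \<delta> by (simp add: z0_def)
  have "conv_radius c \<ge> norm z0"
    by (rule conv_radius_geI) (rule sums_summable[OF ser[OF z0]])
  then have cr: "ereal (\<delta> / 2) \<le> conv_radius c" using \<delta> by (simp add: z0_def)
  have "0 < ereal (\<delta> / 2)" using \<delta> by simp
  then have "0 < conv_radius c" using cr by (rule order.strict_trans2)
  then have conv: "fps_conv_radius F > 0" by (simp add: F_def fps_conv_radius_def)
  have "eventually (\<lambda>z. z \<in> ball 0 \<delta>) (nhds (0::complex))"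
    by (rule eventually_nhds_in_open) (use \<delta> in auto)
  then have "eventually (\<lambda>z. eval_fps F z = f z) (nhds 0)"
  proof (rule eventually_mono)
    fix z :: complex assume "z \<in> ball 0 \<delta>"
    then show "eval_fps F z = f z" using sums_unique[OF ser[OF \<open>z \<in> ball 0 \<delta>\<close>]] by (simp add: eval_fps_def F_def)
  qed
  then have "f has_fps_expansion F" using conv by (simp add: has_fps_expansion_def)
  then have "fps_nth F n = (deriv ^^ n) f 0 / fact n" by (rule fps_nth_fps_expansion)
  then show ?thesis by (simp add: F_def c_def f_def[abs_def])
qed

lemma holo_deriv:
  assumes dom: "\<And>\<mu>. \<mu> \<in> ball 0 \<rho> \<Longrightarrow> \<exists>R. good \<mu> R" and \<mu>0: "\<mu>0 \<in> ball 0 \<rho>" and x: "x \<in> M"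
  shows "((\<lambda>\<mu>. cinner (Rs \<mu> x) y) has_field_derivative cinner (Rs \<mu>0 (L (Rs \<mu>0 x))) y) (at \<mu>0)"
proof -
  define R0 where "R0 = Rs \<mu>0"
  have R0: "good \<mu>0 R0" using Rs_good[OF dom[OF \<mu>0]] by (simp add: R0_def)
  define v where "v = L (R0 x)"
  have vM: "v \<in> M" using L_M[OF good_M[OF R0 x]] by (simp add: v_def)
  define K where "K = 2 * nrm M R0 * nrm M L * nrm M R0"
  have nL: "0 \<le> nrm M L" by (rule nrm_nonneg[OF L_bcl])
  have nR0: "0 \<le> nrm M R0" by (rule nrm_nonneg[OF good_bcl[OF R0]])
  define d where "d = min (\<rho> - cmod \<mu>0) (1 / (2 * (nrm M L * nrm M R0 + 1)))"
  have p0: "0 \<le> nrm M L * nrm M R0" using nL nR0 by simp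
  have d: "d > 0" using \<mu>0 p0 by (simp add: d_def add_nonneg_pos)
  have ev: "eventually (\<lambda>\<mu>. \<mu> \<in> ball 0 \<rho> \<and> cmod (\<mu> - \<mu>0) * nrm M L * nrm M R0 \<le> 1/2) (at \<mu>0)"
    unfolding eventually_at
  proof (intro exI[of _ d] conjI d ballI impI)
    fix \<mu> :: complex assume "\<mu> \<noteq> \<mu>0 \<and> dist \<mu> \<mu>0 < d"
    then have dd: "cmod (\<mu> - \<mu>0) < d" by (simp add: dist_norm)
    have "cmod \<mu> \<le> cmod \<mu>0 + cmod (\<mu> - \<mu>0)" by (metis norm_triangle_sub add.commute)
    also have "\<dots> < \<rho>" using dd by (simp add: d_def)
    finally show "\<mu> \<in> ball 0 \<rho>" by simp
    have p: "0 \<le> nrm M L * nrm M R0" using nL nR0 by simp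
    have "cmod (\<mu> - \<mu>0) * nrm M L * nrm M R0 \<le> cmod (\<mu> - \<mu>0) * (nrm M L * nrm M R0 + 1)"
      by (simp add: mult.assoc mult_left_mono)
    also have "\<dots> \<le> d * (nrm M L * nrm M R0 + 1)" using dd p by (intro mult_right_mono) auto
    also have "\<dots> \<le> 1 / (2 * (nrm M L * nrm M R0 + 1)) * (nrm M L * nrm M R0 + 1)"
      using p by (intro mult_right_mono) (auto simp: d_def)
    also have "\<dots> = 1/2" using p by simp
    finally show "cmod (\<mu> - \<mu>0) * nrm M L * nrm M R0 \<le> 1/2" .
  qed
  have key: "norm ((cinner (Rs \<mu> x) y - cinner (Rs \<mu>0 x) y) / (\<mu> - \<mu>0) - cinner (Rs \<mu>0 (L (Rs \<mu>0 x))) y)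
      \<le> cmod (\<mu> - \<mu>0) * (K * norm v * norm y)"
    if \<mu>: "\<mu> \<in> ball 0 \<rho>" "cmod (\<mu> - \<mu>0) * nrm M L * nrm M R0 \<le> 1/2" "\<mu> \<noteq> \<mu>0" for \<mu>
  proof -
    have R: "good \<mu> (Rs \<mu>)" by (rule Rs_good[OF dom[OF \<mu>(1)]])
    have "cinner (Rs \<mu> x) y - cinner (Rs \<mu>0 x) y = cinner (Rs \<mu> x - R0 x) y"
      by (simp add: cinner_diff_left R0_def)
    also have "\<dots> = (\<mu> - \<mu>0) * cinner (Rs \<mu> v) y"
      by (simp add: res_id[OF R0 R x] cinner_scaleC_left v_def)
    finally have q: "(cinner (Rs \<mu> x) y - cinner (Rs \<mu>0 x) y) / (\<mu> - \<mu>0) = cinner (Rs \<mu> v) y"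
      using \<mu>(3) by simp
    have "norm (cinner (Rs \<mu> v) y - cinner (R0 v) y) = norm (cinner (Rs \<mu> v - R0 v) y)"
      by (simp add: cinner_diff_left)
    also have "\<dots> \<le> norm (Rs \<mu> v - R0 v) * norm y" by (rule cauchy_schwarz)
    also have "\<dots> \<le> (cmod (\<mu> - \<mu>0) * K * norm v) * norm y"
      by (intro mult_right_mono diff_bound[OF R0 R \<mu>(2) vM, folded K_def]) auto
    finally show ?thesis using q by (simp add: R0_def v_def mult_ac)
  qed
  have "((\<lambda>\<mu>. (cinner (Rs \<mu> x) y - cinner (Rs \<mu>0 x) y) / (\<mu> - \<mu>0) - cinner (Rs \<mu>0 (L (Rs \<mu>0 x))) y) \<longlongrightarrow> 0) (at \<mu>0)"
  proof (rule Lim_null_comparison)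
    show "eventually (\<lambda>\<mu>. norm ((cinner (Rs \<mu> x) y - cinner (Rs \<mu>0 x) y) / (\<mu> - \<mu>0) - cinner (Rs \<mu>0 (L (Rs \<mu>0 x))) y)
      \<le> cmod (\<mu> - \<mu>0) * (K * norm v * norm y)) (at \<mu>0)"
      using eventually_conj[OF ev eventually_neq_at_within[of \<mu>0 \<mu>0 UNIV]]
      by (rule eventually_mono) (use key in blast)
    have "((\<lambda>\<mu>. cmod (\<mu> - \<mu>0) * (K * norm v * norm y)) \<longlongrightarrow> cmod (\<mu>0 - \<mu>0) * (K * norm v * norm y)) (at \<mu>0)"
      by (intro tendsto_intros)
    then show "((\<lambda>\<mu>. cmod (\<mu> - \<mu>0) * (K * norm v * norm y)) \<longlongrightarrow> 0) (at \<mu>0)" by simp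
  qed
  then show ?thesis by (simp add: has_field_derivative_iff Lim_null[symmetric])
qed

lemma holo:
  assumes dom: "\<And>\<mu>. \<mu> \<in> ball 0 \<rho> \<Longrightarrow> \<exists>R. good \<mu> R" and x: "x \<in> M"
  shows "(\<lambda>\<mu>. cinner (Rs \<mu> x) y) holomorphic_on ball 0 \<rho>"
  unfolding holomorphic_on_def field_differentiable_def
  using holo_deriv[OF dom _ x] has_field_derivative_at_within by blast

lemma nrm_cont:
  assumes dom: "\<And>\<mu>. \<mu> \<in> ball 0 \<rho> \<Longrightarrow> \<exists>R. good \<mu> R"
  shows "continuous_on (ball 0 \<rho>) (\<lambda>\<mu>. nrm M (Rs \<mu>))"
  unfolding continuous_on_eq_continuous_at[OF open_ball]
proof
  fix \<mu>0 assume \<mu>0: "\<mu>0 \<in> ball (0::complex) \<rho>"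
  define R0 where "R0 = Rs \<mu>0"
  have R0: "good \<mu>0 R0" using Rs_good[OF dom[OF \<mu>0]] by (simp add: R0_def)
  define K where "K = 2 * nrm M R0 * nrm M L * nrm M R0"
  have nL: "0 \<le> nrm M L" by (rule nrm_nonneg[OF L_bcl])
  have nR0: "0 \<le> nrm M R0" by (rule nrm_nonneg[OF good_bcl[OF R0]])
  define d where "d = min (\<rho> - cmod \<mu>0) (1 / (2 * (nrm M L * nrm M R0 + 1)))"
  have p0: "0 \<le> nrm M L * nrm M R0" using nL nR0 by simp
  have d: "d > 0" using \<mu>0 p0 by (simp add: d_def add_nonneg_pos)
  have ev: "eventually (\<lambda>\<mu>. \<mu> \<in> ball 0 \<rho> \<and> cmod (\<mu> - \<mu>0) * nrm M L * nrm M R0 \<le> 1/2) (at \<mu>0)"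
    unfolding eventually_at
  proof (intro exI[of _ d] conjI d ballI impI)
    fix \<mu> :: complex assume "\<mu> \<noteq> \<mu>0 \<and> dist \<mu> \<mu>0 < d"
    then have dd: "cmod (\<mu> - \<mu>0) < d" by (simp add: dist_norm)
    have "cmod \<mu> \<le> cmod \<mu>0 + cmod (\<mu> - \<mu>0)" by (metis norm_triangle_sub add.commute)
    also have "\<dots> < \<rho>" using dd by (simp add: d_def)
    finally show "\<mu> \<in> ball 0 \<rho>" by simp
    have p: "0 \<le> nrm M L * nrm M R0" using nL nR0 by simp
    have "cmod (\<mu> - \<mu>0) * nrm M L * nrm M R0 \<le> cmod (\<mu> - \<mu>0) * (nrm M L * nrm M R0 + 1)"
      by (simp add: mult.assoc mult_left_mono)
    also have "\<dots> \<le> d * (nrm M L * nrm M R0 + 1)" using dd p by (intro mult_right_mono) auto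
    also have "\<dots> \<le> 1 / (2 * (nrm M L * nrm M R0 + 1)) * (nrm M L * nrm M R0 + 1)"
      using p by (intro mult_right_mono) (auto simp: d_def)
    also have "\<dots> = 1/2" using p by simp
    finally show "cmod (\<mu> - \<mu>0) * nrm M L * nrm M R0 \<le> 1/2" .
  qed
  have key: "norm (nrm M (Rs \<mu>) - nrm M (Rs \<mu>0)) \<le> cmod (\<mu> - \<mu>0) * K"
    if \<mu>: "\<mu> \<in> ball 0 \<rho>" "cmod (\<mu> - \<mu>0) * nrm M L * nrm M R0 \<le> 1/2" for \<mu>
  proof -
    have R: "good \<mu> (Rs \<mu>)" by (rule Rs_good[OF dom[OF \<mu>(1)]])
    have Rb: "bounded_clinear (Rs \<mu>)" by (rule good_bcl[OF R])
    have R0b: "bounded_clinear R0" by (rule good_bcl[OF R0])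
    have K0: "0 \<le> cmod (\<mu> - \<mu>0) * K" using nL nR0 by (simp add: K_def)
    have a: "nrm M (\<lambda>x. Rs \<mu> x - R0 x) \<le> cmod (\<mu> - \<mu>0) * K"
      by (rule nrm_le[OF bounded_clinear_minus_op[OF Rb R0b]]) (use diff_bound[OF R0 R \<mu>(2)] in \<open>simp add: K_def\<close>)
    have b: "nrm M (\<lambda>x. R0 x - Rs \<mu> x) \<le> cmod (\<mu> - \<mu>0) * K"
      by (rule nrm_le[OF bounded_clinear_minus_op[OF R0b Rb]])
         (use diff_bound[OF R0 R \<mu>(2)] in \<open>simp add: K_def norm_minus_commute\<close>)
    have "nrm M (Rs \<mu>) \<le> nrm M R0 + cmod (\<mu> - \<mu>0) * K" using nrm_triangle[OF Rb R0b] a by linarith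
    moreover have "nrm M R0 \<le> nrm M (Rs \<mu>) + cmod (\<mu> - \<mu>0) * K" using nrm_triangle[OF R0b Rb] b by linarith
    ultimately show ?thesis by (simp add: R0_def abs_le_iff)
  qed
  have "((\<lambda>\<mu>. nrm M (Rs \<mu>) - nrm M (Rs \<mu>0)) \<longlongrightarrow> 0) (at \<mu>0)"
  proof (rule Lim_null_comparison)
    show "eventually (\<lambda>\<mu>. norm (nrm M (Rs \<mu>) - nrm M (Rs \<mu>0)) \<le> cmod (\<mu> - \<mu>0) * K) (at \<mu>0)"
      using ev by (rule eventually_mono) (use key in blast)
    have "((\<lambda>\<mu>. cmod (\<mu> - \<mu>0) * K) \<longlongrightarrow> cmod (\<mu>0 - \<mu>0) * K) (at \<mu>0)"
      by (intro tendsto_intros)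
    then show "((\<lambda>\<mu>. cmod (\<mu> - \<mu>0) * K) \<longlongrightarrow> 0) (at \<mu>0)" by simp
  qed
  then show "isCont (\<lambda>\<mu>. nrm M (Rs \<mu>)) \<mu>0" by (simp add: isCont_def Lim_null[symmetric])
qed

lemma cauchy_est:
  assumes dom: "\<And>\<mu>. \<mu> \<in> ball 0 \<rho> \<Longrightarrow> \<exists>R. good \<mu> R" and r: "0 < r" "r < \<rho>"
  shows "\<exists>B. \<forall>n. nrm M (L ^^ n) \<le> B / r ^ n"
proof -
  have sph: "sphere (0::complex) r \<subseteq> ball 0 \<rho>" using r by auto
  have "compact ((\<lambda>\<mu>. nrm M (Rs \<mu>)) ` sphere 0 r)"
    by (rule compact_continuous_image[OF continuous_on_subset[OF nrm_cont[OF dom] sph] compact_sphere])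
  then obtain B1 where B1: "\<And>\<mu>. \<mu> \<in> sphere 0 r \<Longrightarrow> norm (nrm M (Rs \<mu>)) \<le> B1"
    using compact_imp_bounded bounded_iff by (metis image_eqI)
  define B0 where "B0 = max B1 0"
  have B0: "\<And>\<mu>. \<mu> \<in> sphere 0 r \<Longrightarrow> nrm M (Rs \<mu>) \<le> B0" "0 \<le> B0"
    using B1 by (force simp: B0_def)+
  have "nrm M (L ^^ n) \<le> B0 / r ^ n" for n
  proof (rule nrm_le[OF Lp_bcl])
    fix x assume x: "x \<in> M"
    define y where "y = (L ^^ n) x"
    define f where "f \<mu> = cinner (Rs \<mu> x) y" for \<mu>
    have hol: "f holomorphic_on ball 0 \<rho>" unfolding f_def[abs_def] by (rule holo[OF dom x])
    have holf: "f holomorphic_on ball 0 r" by (rule holomorphic_on_subset[OF hol]) (use r in auto)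
    have contf: "continuous_on (cball 0 r) f"
      by (rule continuous_on_subset[OF holomorphic_on_imp_continuous_on[OF hol]]) (use r in auto)
    have nof: "norm (f \<mu>) \<le> B0 * norm x * norm y" if "norm (0 - \<mu>) = r" for \<mu>
    proof -
      have \<mu>s: "\<mu> \<in> sphere 0 r" using that by simp
      have R: "good \<mu> (Rs \<mu>)" by (rule Rs_good[OF dom]) (use \<mu>s sph in auto)
      have "norm (f \<mu>) \<le> norm (Rs \<mu> x) * norm y" unfolding f_def by (rule cauchy_schwarz)
      also have "\<dots> \<le> (nrm M (Rs \<mu>) * norm x) * norm y"
        by (intro mult_right_mono nrm_bound[OF good_bcl[OF R] x]) auto
      also have "\<dots> \<le> (B0 * norm x) * norm y" by (intro mult_right_mono B0(1)[OF \<mu>s]) auto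
      finally show ?thesis .
    qed
    have CI: "norm ((deriv ^^ n) f 0) \<le> fact n * (B0 * norm x * norm y) / r ^ n"
      by (rule Cauchy_inequality[OF holf contf r(1) nof])
    have "(deriv ^^ n) f 0 = fact n * cinner ((L ^^ n) x) y"
      unfolding f_def[abs_def] by (rule coef[OF x])
    moreover have "cinner ((L ^^ n) x) y = complex_of_real ((norm y)\<^sup>2)" by (simp add: y_def cinner_self)
    ultimately have e1: "norm ((deriv ^^ n) f 0) = fact n * (norm y)\<^sup>2"
      by (simp add: norm_mult norm_power del: of_real_power)
    have "fact n * (norm y)\<^sup>2 \<le> fact n * (B0 * norm x * norm y) / r ^ n" using CI unfolding e1 .
    then have "fact n * (norm y)\<^sup>2 \<le> fact n * ((B0 * norm x * norm y) / r ^ n)" by (simp only: times_divide_eq_right)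
    then have h0: "(norm y)\<^sup>2 \<le> (B0 * norm x * norm y) / r ^ n"
      by (metis fact_gt_zero mult_le_cancel_left_pos)
    have eq: "(B0 * norm x * norm y) / r ^ n = (B0 / r ^ n * norm x) * norm y"
      by (simp only: times_divide_eq_left[symmetric] divide_inverse mult_ac)
    have h: "norm y * norm y \<le> (B0 / r ^ n * norm x) * norm y"
      using h0 unfolding eq power2_eq_square .
    have "norm y \<le> B0 / r ^ n * norm x"
    proof (cases "norm y = 0")
      case True then show ?thesis using B0(2) r by simp
    next
      case False then have "0 < norm y" by simp
      then show ?thesis using h by (simp only: mult_le_cancel_right_pos)
    qed
    then show "norm ((L ^^ n) x) \<le> B0 / r ^ n * norm x" by (simp add: y_def)
  qed
  then show ?thesis by blast
qed

end


context opL
begin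

abbreviation "sig \<equiv> spectrum_on M L"

lemma sig_bound: "l \<in> sig \<Longrightarrow> cmod l \<le> nrm M L"
  using spec_bound[of l 1] by simp

lemma dom_from_spec:
  assumes "\<And>l. l \<in> sig \<Longrightarrow> cmod l < t" and t: "t > 0"
  shows "\<And>\<mu>. \<mu> \<in> ball 0 (1 / t) \<Longrightarrow> \<exists>R. good \<mu> R"
proof -
  fix \<mu> :: complex assume \<mu>: "\<mu> \<in> ball 0 (1 / t)"
  show "\<exists>R. good \<mu> R"
  proof (cases "\<mu> = 0")
    case True then show ?thesis using good_0 by blast
  next
    case False
    have "cmod \<mu> < 1 / t" using \<mu> by simp
    then have "t < 1 / cmod \<mu>" using t False by (simp add: field_simps)
    then have "t \<le> cmod (inverse \<mu>)" by (simp add: norm_inverse divide_inverse)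
    then have "inverse \<mu> \<notin> sig" using assms(1) by force
    then show ?thesis by (rule good_from_spec[OF False])
  qed
qed

lemma sig_nonempty: "sig \<noteq> {}"
proof
  assume empty: "sig = {}"
  have "0 \<notin> sig" using empty by simp
  then have "invertible_on M (E 0)" by (simp add: spectrum_on_def E_def[abs_def])
  then obtain R where R: "opsM M R" "\<And>x. x \<in> M \<Longrightarrow> R (E 0 x) = x"
    using invertible_onD[of "E 0"] opsM_M[OF E_ops] by blast
  have Rb: "bounded_clinear R" using R(1) by (simp add: opsM_def)
  define c where "c = nrm M R"
  have c0: "0 \<le> c" by (simp add: c_def nrm_nonneg[OF Rb])
  have step: "norm x \<le> c * norm (L x)" if "x \<in> M" for x
  proof -
    have "x = R (E 0 x)" using R(2)[OF that] by simp
    also have "E 0 x = - L x" by (simp add: E_def)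
    finally have "norm x = norm (R (- L x))" by simp
    also have "\<dots> \<le> c * norm (- L x)" unfolding c_def
      by (rule nrm_bound[OF Rb]) (simp add: L_M that csubspace_minus[OF M_sub])
    finally show ?thesis by simp
  qed
  have pw: "norm x \<le> c ^ n * norm ((L ^^ n) x)" if x: "x \<in> M" for x n
  proof (induct n)
    case 0 then show ?case by simp
  next
    case (Suc n)
    have "norm ((L ^^ n) x) \<le> c * norm (L ((L ^^ n) x))"
      by (rule step[OF opsM_M[OF opsM_funpow[OF L_ops] x]])
    then have "c ^ n * norm ((L ^^ n) x) \<le> c ^ n * (c * norm (L ((L ^^ n) x)))"
      using c0 by (intro mult_left_mono) auto
    then show ?case using Suc by (simp add: mult_ac)
  qed
  define r where "r = 2 * c + 1"
  have r: "0 < r" "r < r + 1" using c0 by (auto simp: r_def)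
  have dom: "\<And>\<mu>. \<mu> \<in> ball 0 (r + 1) \<Longrightarrow> \<exists>R. good \<mu> R"
  proof -
    fix \<mu> :: complex
    show "\<exists>R. good \<mu> R"
    proof (cases "\<mu> = 0")
      case True then show ?thesis using good_0 by blast
    next
      case False then show ?thesis using good_from_spec[OF False] empty by blast
    qed
  qed
  obtain B where B: "\<And>n. nrm M (L ^^ n) \<le> B / r ^ n" using cauchy_est[OF dom r] by blast
  obtain x where x: "x \<in> M" "x \<noteq> 0" using M_nz by blast
  have q: "0 \<le> c / r" "c / r < 1" using c0 r by (auto simp: r_def field_simps)
  have "(\<lambda>n. B * (c / r) ^ n) \<longlonglongrightarrow> B * 0" by (intro tendsto_intros) (use q in simp)
  then have "(\<lambda>n. B * (c / r) ^ n) \<longlonglongrightarrow> 0" by simp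
  then have "eventually (\<lambda>n. B * (c / r) ^ n < 1) sequentially" using order_tendstoD(2)[of "\<lambda>n. B * (c / r) ^ n" "0::real" sequentially "1::real"] by simp
  then obtain N where "\<forall>n\<ge>N. B * (c / r) ^ n < 1" by (auto simp: eventually_sequentially)
  then have n: "B * (c / r) ^ N < 1" by blast
  have "norm x \<le> c ^ N * norm ((L ^^ N) x)" by (rule pw[OF x(1)])
  also have "\<dots> \<le> c ^ N * (nrm M (L ^^ N) * norm x)"
    by (intro mult_left_mono nrm_bound[OF Lp_bcl x(1)]) (use c0 in simp)
  also have "\<dots> \<le> c ^ N * (B / r ^ N * norm x)"
    by (intro mult_left_mono mult_right_mono B) (use c0 in simp_all)
  also have "\<dots> = (B * (c / r) ^ N) * norm x" by (simp add: power_divide)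
  also have "\<dots> < 1 * norm x" using n x by (intro mult_strict_right_mono) auto
  finally show False by simp
qed

lemma sig_bdd: "bdd_above (cmod ` sig)"
  using sig_bound by (intro bdd_aboveI[of _ "nrm M L"]) auto

definition srad where "srad = Sup (cmod ` sig)"

lemma srad_upper: "l \<in> sig \<Longrightarrow> cmod l \<le> srad"
  unfolding srad_def by (rule cSup_upper) (auto intro: sig_bdd)

lemma srad_nonneg: "0 \<le> srad"
proof -
  obtain l where "l \<in> sig" using sig_nonempty by blast
  then show ?thesis using srad_upper[of l] norm_ge_zero[of l] by linarith
qed

lemma srad_lower: "n \<ge> 1 \<Longrightarrow> srad \<le> root n (nrm M (L ^^ n))"
  unfolding srad_def
proof (rule cSup_least)
  show "cmod ` sig \<noteq> {}" using sig_nonempty by blast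
  fix a assume n: "n \<ge> 1" and "a \<in> cmod ` sig"
  then obtain l where l: "l \<in> sig" "a = cmod l" by blast
  have "cmod l = root n (cmod l ^ n)" using n by (simp add: real_root_power_cancel)
  also have "\<dots> \<le> root n (nrm M (L ^^ n))" using n spec_bound[OF l(1) n] by (intro real_root_le_mono) auto
  finally show "a \<le> root n (nrm M (L ^^ n))" using l by simp
qed

lemma srad_upper_ev:
  assumes e: "e > 0"
  shows "eventually (\<lambda>n. root n (nrm M (L ^^ n)) \<le> srad + e) sequentially"
proof -
  define t where "t = srad + e / 4"
  have t: "t > 0" using srad_nonneg e by (simp add: t_def)
  have lt: "cmod l < t" if "l \<in> sig" for l using srad_upper[OF that] e by (simp add: t_def)
  have dom: "\<And>\<mu>. \<mu> \<in> ball 0 (1 / t) \<Longrightarrow> \<exists>R. good \<mu> R" by (rule dom_from_spec[OF lt t])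
  define u where "u = srad + e / 2"
  have u: "u > 0" "t < u" using srad_nonneg e by (auto simp: u_def t_def)
  have r: "0 < 1 / u" "1 / u < 1 / t" using u t by (auto simp: field_simps)
  obtain B0 where B0: "\<And>n. nrm M (L ^^ n) \<le> B0 / (1 / u) ^ n" using cauchy_est[OF dom r] by blast
  define B where "B = max B0 1"
  have Bp: "0 < B" by (simp add: B_def)
  have Bb: "nrm M (L ^^ n) \<le> B * u ^ n" for n
  proof -
    have "nrm M (L ^^ n) \<le> B0 * u ^ n" using B0[of n] by (simp add: power_one_over)
    also have "\<dots> \<le> B * u ^ n" using u by (intro mult_right_mono) (auto simp: B_def)
    finally show ?thesis .
  qed
  have "(\<lambda>n. root n B) \<longlonglongrightarrow> 1" by (rule LIMSEQ_root_const[OF Bp])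
  moreover have "1 < (srad + e) / u" using u e by (simp add: u_def field_simps)
  ultimately have ev: "eventually (\<lambda>n. root n B < (srad + e) / u) sequentially" by (rule order_tendstoD)
  have ev1: "eventually (\<lambda>n. n \<ge> 1) sequentially" by (rule eventually_ge_at_top)
  show ?thesis
    using eventually_conj[OF ev ev1]
  proof (rule eventually_mono)
    fix n :: nat assume h: "root n B < (srad + e) / u \<and> n \<ge> 1"
    have n: "0 < n" using h by simp
    have "root n (nrm M (L ^^ n)) \<le> root n (B * u ^ n)" using n Bb by (simp add: real_root_le_mono)
    also have "\<dots> = root n B * u" using n u by (simp add: real_root_mult real_root_power_cancel)
    also have "\<dots> \<le> (srad + e) / u * u" using h u by (intro mult_right_mono) auto
    also have "\<dots> = srad + e" using u by simp
    finally show "root n (nrm M (L ^^ n)) \<le> srad + e" .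
  qed
qed

theorem gelfand: "(\<lambda>n. nrm M (L ^^ n) powr (1 / real n)) \<longlonglongrightarrow> srad"
proof -
  have eq: "eventually (\<lambda>n. nrm M (L ^^ n) powr (1 / real n) = root n (nrm M (L ^^ n))) sequentially"
    using eventually_ge_at_top[of 1]
    by (rule eventually_mono) (simp add: root_powr_inverse nrm_nonneg[OF Lp_bcl])
  have "(\<lambda>n. root n (nrm M (L ^^ n))) \<longlonglongrightarrow> srad"
  proof (rule order_tendstoI)
    fix a assume a: "a < srad"
    show "eventually (\<lambda>n. a < root n (nrm M (L ^^ n))) sequentially"
      using eventually_ge_at_top[of 1] by (rule eventually_mono) (use a srad_lower in \<open>meson less_le_trans\<close>)
  next
    fix b assume b: "srad < b"
    have "eventually (\<lambda>n. root n (nrm M (L ^^ n)) \<le> srad + (b - srad) / 2) sequentially"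
      by (rule srad_upper_ev) (use b in simp)
    then show "eventually (\<lambda>n. root n (nrm M (L ^^ n)) < b) sequentially"
    proof (rule eventually_mono)
      fix n assume "root n (nrm M (L ^^ n)) \<le> srad + (b - srad) / 2"
      moreover have "srad + (b - srad) / 2 < b" using b by (simp add: field_simps)
      ultimately show "root n (nrm M (L ^^ n)) < b" by (rule le_less_trans)
    qed
  qed
  then show ?thesis unfolding tendsto_cong[OF eq] .
qed

end


context setting
begin

lemma M_nz: "\<exists>x\<in>M. x \<noteq> 0"
proof -
  obtain x where "A x \<noteq> 0" using A_nz by auto
  moreover have "A x \<in> M" by (rule subsetD[OF closure_subset rangeI])
  ultimately show ?thesis by blast
qed

lemma L_ops: "opsM M L"
  by (simp add: opsM_def L_bcl L_M)

end

sublocale setting \<subseteq> g: opL "closure (range A)" L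
  by unfold_locales (simp_all add: M_sub M_nz L_ops)

context setting
begin

lemma BA_null:
  assumes RB: "R \<in> BAhalf A" and z: "A z = 0"
  shows "A (R z) = 0"
proof -
  have Rb: "bounded_clinear R" using RB by (simp add: BAhalf_def)
  have Rr: "\<exists>w. adjoint R (S y) = S w" for y using RB by (auto simp: BAhalf_def image_subset_iff)
  have Sz: "S z = 0" using z null_S by blast
  have "cinner (S (R z)) y = 0" for y
  proof -
    obtain w where w: "adjoint R (S y) = S w" using Rr by blast
    have "cinner (S (R z)) y = cinner (R z) (S y)" by (rule S_sa)
    also have "\<dots> = cinner z (adjoint R (S y))" by (rule adjoint_eq[OF Rb])
    also have "\<dots> = cinner z (S w)" by (simp add: w)
    also have "\<dots> = cinner (S z) w" by (simp add: S_sa)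
    finally show ?thesis using Sz by simp
  qed
  from this[of "S (R z)"] have "S (R z) = 0" by (simp add: cinner_eq_zero_iff)
  then show ?thesis using null_S by blast
qed

lemma PRP:
  assumes RB: "R \<in> BAhalf A"
  shows "P (R (P x)) = P (R x)"
proof -
  have Rb: "bounded_clinear R" using RB by (simp add: BAhalf_def)
  have "A (x - P x) = 0" by (simp add: bounded_clinear_diff[OF A_bcl] A_P)
  then have "A (R (x - P x)) = 0" by (rule BA_null[OF RB])
  then have "P (R (x - P x)) = 0" using P_zero by blast
  then show ?thesis by (simp add: bounded_clinear_diff[OF Rb] bounded_clinear_diff[OF P_bcl])
qed

lemma P_eq_of_A: "A u = A v \<Longrightarrow> P u = P v"
proof -
  assume "A u = A v"
  then have "A (u - v) = 0" by (simp add: bounded_clinear_diff[OF A_bcl])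
  then have "P (u - v) = 0" using P_zero by blast
  then show "P u = P v" by (simp add: bounded_clinear_diff[OF P_bcl])
qed

lemma sig_sub: "g.sig \<subseteq> spectrumA A T"
proof
  fix l assume l: "l \<in> g.sig"
  show "l \<in> spectrumA A T"
  proof (rule ccontr)
    assume "l \<notin> spectrumA A T"
    then obtain R where RB: "R \<in> BAhalf A" and r1: "A \<circ> (\<lambda>x. scaleC l x - T x) \<circ> R = A"
      and r2: "A \<circ> R \<circ> (\<lambda>x. scaleC l x - T x) = A"
      by (auto simp: spectrumA_def A_invertible_def)
    have Rb: "bounded_clinear R" using RB by (simp add: BAhalf_def)
    define E where "E x = scaleC l x - T x" for x
    have AER: "A (E (R x)) = A x" for x using r1 by (metis comp_apply E_def)
    have ARE: "A (R (E x)) = A x" for x using r2 by (metis comp_apply E_def)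
    define R' where "R' x = P (R x)" for x
    have R'ops: "opsM M R'"
    proof -
      have "bounded_clinear (\<lambda>x. P (R x))" by (rule bounded_clinear_compose[OF P_bcl Rb])
      then show ?thesis by (simp add: opsM_def R'_def[abs_def] P_M)
    qed
    have "invertible_on M (\<lambda>x. scaleC l x - L x)"
    proof (rule g.invertible_onI[OF R'ops R'ops])
      fix x assume x: "x \<in> M"
      have "L (R' x) = P (T (R x))" by (simp add: L_def R'_def P_idem PTP)
      then have "scaleC l (R' x) - L (R' x) = P (E (R x))"
        by (simp add: R'_def E_def bounded_clinear_diff[OF P_bcl] bounded_clinear_scaleC[OF P_bcl])
      also have "\<dots> = P x" by (rule P_eq_of_A[OF AER])
      also have "\<dots> = x" by (rule P_id[OF x])
      finally show "scaleC l (R' x) - L (R' x) = x" .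
    next
      fix x assume x: "x \<in> M"
      have "L x = P (T x)" by (simp add: L_def P_id[OF x])
      then have "scaleC l x - L x = P (E x)"
        by (simp add: E_def bounded_clinear_diff[OF P_bcl] bounded_clinear_scaleC[OF P_bcl] P_id[OF x])
      then have "R' (scaleC l x - L x) = P (R (E x))" by (simp add: R'_def PRP[OF RB])
      also have "\<dots> = P x" by (rule P_eq_of_A[OF ARE])
      also have "\<dots> = x" by (rule P_id[OF x])
      finally show "R' (scaleC l x - L x) = x" .
    qed
    then show False using l by (simp add: spectrum_on_def)
  qed
qed

lemma normA_eq: "normA A v = norm (S v)"
proof -
  have "cinner (A v) v = cinner (S v) (S v)" by (simp add: SS[symmetric] S_sa)
  then show ?thesis by (simp add: normA_def cinner_self)
qed

lemma Ts_pow_bcl: "bounded_clinear (Ts ^^ n)" by (rule bounded_clinear_funpow[OF Ts_bcl])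

lemma opnormA_eq: "opnormA A (D0 ^^ n) = nrm M (L ^^ n)"
proof -
  define \<alpha> where "\<alpha> = nrm M (L ^^ n)"
  define X where "X = {normA A ((D0 ^^ n) x) | x. x \<in> M \<and> normA A x = 1}"
  have Lnb: "bounded_clinear (L ^^ n)" by (rule bounded_clinear_funpow[OF L_bcl])
  have LnM: "y \<in> M \<Longrightarrow> (L ^^ n) y \<in> M" for y by (rule Lpow_M)
  have i: "norm ((Ts ^^ n) z) \<le> \<alpha> * norm z" if z: "z \<in> M" for z
  proof -
    define w where "w = (Ts ^^ n) z"
    have wM: "w \<in> M" using Ts_pow_M[OF z] by (simp add: w_def)
    have "(norm w)\<^sup>2 = Re (cinner ((L ^^ n) w) z)"
      using Lpow_inner[OF wM z, of n] by (simp add: w_def norm_sq_cinner)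
    also have "\<dots> \<le> cmod (cinner ((L ^^ n) w) z)" by (rule complex_Re_le_cmod)
    also have "\<dots> \<le> norm ((L ^^ n) w) * norm z" by (rule cauchy_schwarz)
    also have "\<dots> \<le> (\<alpha> * norm w) * norm z"
      by (intro mult_right_mono g.nrm_bound[OF Lnb wM, folded \<alpha>_def]) auto
    finally have "norm w * norm w \<le> (\<alpha> * norm z) * norm w" by (simp add: power2_eq_square mult_ac)
    then have "norm w \<le> \<alpha> * norm z"
    proof (cases "norm w = 0")
      case True then show ?thesis using g.nrm_nonneg[OF Lnb] by (simp add: \<alpha>_def)
    next
      case False then have "0 < norm w" by simp
      with \<open>norm w * norm w \<le> (\<alpha> * norm z) * norm w\<close> show ?thesis
        by (simp only: mult_le_cancel_right_pos)
    qed
    then show ?thesis by (simp add: w_def)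
  qed
  have elem: "normA A ((D0 ^^ n) x) = norm ((Ts ^^ n) (S x))" for x
    by (simp add: normA_eq SD0_pow)
  have X_le: "a \<le> \<alpha>" if "a \<in> X" for a
  proof -
    have "\<exists>x. a = normA A ((D0 ^^ n) x) \<and> x \<in> M \<and> normA A x = 1" using that unfolding X_def by blast
    then obtain x where x: "a = normA A ((D0 ^^ n) x)" "x \<in> M" "normA A x = 1" by blast
    have "a = norm ((Ts ^^ n) (S x))" using x elem by simp
    also have "\<dots> \<le> \<alpha> * norm (S x)" by (rule i[OF S_M])
    also have "norm (S x) = 1" using x normA_eq by simp
    finally show ?thesis by simp
  qed
  have X_ne: "X \<noteq> {}"
  proof -
    have "\<exists>x\<in>M. S x \<noteq> 0"
    proof (rule ccontr)
      assume "\<not> ?thesis"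
      then have "S ` M \<subseteq> {0}" by auto
      then have "closure (S ` M) \<subseteq> {0}" using closure_minimal by blast
      then have "M \<subseteq> {0}" using M_sub_closure_SM by blast
      then show False using M_nz by auto
    qed
    then obtain x where x: "x \<in> M" "S x \<noteq> 0" by blast
    define x' where "x' = scaleC (complex_of_real (1 / norm (S x))) x"
    have "x' \<in> M" using x M_sub by (simp add: x'_def csubspace_scaleC)
    moreover have "normA A x' = 1"
      using x by (simp add: normA_eq x'_def bounded_clinear_scaleC[OF S_bcl] norm_divide)
    ultimately show ?thesis by (auto simp: X_def)
  qed
  have X_bdd: "bdd_above X" using X_le by (intro bdd_aboveI) blast
  define \<beta> where "\<beta> = Sup X"
  have b_le: "\<beta> \<le> \<alpha>" unfolding \<beta>_def by (rule cSup_least[OF X_ne X_le])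
  have b_nn: "0 \<le> \<beta>"
  proof -
    obtain a where "a \<in> X" using X_ne by blast
    moreover then have "0 \<le> a" by (auto simp: X_def normA_eq)
    ultimately show ?thesis using cSup_upper[OF _ X_bdd] by (force simp: \<beta>_def)
  qed
  have sm: "norm ((Ts ^^ n) z) \<le> \<beta> * norm z" if z: "z \<in> S ` M" for z
  proof -
    obtain x where x: "x \<in> M" "z = S x" using z by blast
    show ?thesis
    proof (cases "S x = 0")
      case True then show ?thesis using x by (simp add: bounded_clinear_zero[OF Ts_pow_bcl])
    next
      case False
      define x' where "x' = scaleC (complex_of_real (1 / norm (S x))) x"
      have x'M: "x' \<in> M" using x M_sub by (simp add: x'_def csubspace_scaleC)
      have nx': "normA A x' = 1"
        using False by (simp add: normA_eq x'_def bounded_clinear_scaleC[OF S_bcl] norm_divide)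
      have "normA A ((D0 ^^ n) x') \<in> X" using x'M nx' by (auto simp: X_def)
      then have a: "norm ((Ts ^^ n) (S x')) \<le> \<beta>" using cSup_upper[OF _ X_bdd] elem by (simp add: \<beta>_def)
      have "S x = scaleC (complex_of_real (norm (S x))) (S x')"
        using False by (simp add: x'_def bounded_clinear_scaleC[OF S_bcl] scaleC_scaleC flip: of_real_mult)
      then have "(Ts ^^ n) (S x) = (Ts ^^ n) (scaleC (complex_of_real (norm (S x))) (S x'))"
        by (rule arg_cong)
      also have "\<dots> = scaleC (complex_of_real (norm (S x))) ((Ts ^^ n) (S x'))"
        by (rule bounded_clinear_scaleC[OF Ts_pow_bcl])
      finally have "(Ts ^^ n) (S x) = scaleC (complex_of_real (norm (S x))) ((Ts ^^ n) (S x'))" .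
      then have "norm ((Ts ^^ n) (S x)) = norm (S x) * norm ((Ts ^^ n) (S x'))" by simp
      also have "\<dots> \<le> norm (S x) * \<beta>" by (intro mult_left_mono a) auto
      finally show ?thesis using x by (simp add: mult.commute)
    qed
  qed
  have mm: "norm ((Ts ^^ n) z) \<le> \<beta> * norm z" if z: "z \<in> M" for z
  proof -
    have "z \<in> closure (S ` M)" using z M_sub_closure_SM by blast
    then obtain u where u: "\<forall>k. u k \<in> S ` M" "u \<longlonglongrightarrow> z" using closure_sequential[THEN iffD1] by blast
    have l1: "(\<lambda>k. norm ((Ts ^^ n) (u k))) \<longlonglongrightarrow> norm ((Ts ^^ n) z)"
      by (intro tendsto_norm bounded_clinear_cont[OF Ts_pow_bcl] u(2))
    have l2: "(\<lambda>k. \<beta> * norm (u k)) \<longlonglongrightarrow> \<beta> * norm z" by (intro tendsto_intros u(2))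
    show ?thesis using l1 l2 sm u(1) by (intro LIMSEQ_le[OF l1 l2]) auto
  qed
  have a_le: "\<alpha> \<le> \<beta>" unfolding \<alpha>_def
  proof (rule g.nrm_le[OF Lnb])
    fix y assume y: "y \<in> M"
    define v where "v = (L ^^ n) y"
    have vM: "v \<in> M" using LnM[OF y] by (simp add: v_def)
    have "(norm v)\<^sup>2 = Re (cinner y ((Ts ^^ n) v))"
      using Lpow_inner[OF y vM, of n] by (simp add: v_def norm_sq_cinner)
    also have "\<dots> \<le> cmod (cinner y ((Ts ^^ n) v))" by (rule complex_Re_le_cmod)
    also have "\<dots> \<le> norm y * norm ((Ts ^^ n) v)" by (rule cauchy_schwarz)
    also have "\<dots> \<le> norm y * (\<beta> * norm v)" by (intro mult_left_mono mm[OF vM]) auto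
    finally have h: "norm v * norm v \<le> (\<beta> * norm y) * norm v" by (simp add: power2_eq_square mult_ac)
    have "norm v \<le> \<beta> * norm y"
    proof (cases "norm v = 0")
      case True then show ?thesis using b_nn by simp
    next
      case False then have "0 < norm v" by simp
      with h show ?thesis by (simp only: mult_le_cancel_right_pos)
    qed
    then show "norm ((L ^^ n) y) \<le> \<beta> * norm y" by (simp add: v_def)
  qed
  have "opnormA A (D0 ^^ n) = \<beta>" by (simp add: opnormA_def \<beta>_def X_def)
  then show ?thesis using a_le b_le by (simp add: \<alpha>_def)
qed

lemma final:
  "spec_rad_on M (\<lambda>x. P (T (P x))) = spec_radA A (diamond A T)
   \<and> ereal (spec_radA A (diamond A T)) \<le> (SUP l\<in>spectrumA A T. ereal (cmod l))"
proof -
  have Leq: "(\<lambda>x. P (T (P x))) = L" by (simp add: L_def[abs_def])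
  have r1: "spec_rad_on M (\<lambda>x. P (T (P x))) = g.srad"
    by (simp add: Leq spec_rad_on_def g.srad_def)
  have "(\<lambda>n. opnormA A (diamond A T ^^ n) powr (1 / real n)) \<longlonglongrightarrow> g.srad"
    using g.gelfand by (simp add: diamond_eq opnormA_eq)
  then have r2: "spec_radA A (diamond A T) = g.srad"
    unfolding spec_radA_def by (rule limI)
  have "ereal g.srad \<le> (SUP l\<in>spectrumA A T. ereal (cmod l))"
  proof -
    define Y where "Y = (SUP l\<in>spectrumA A T. ereal (cmod l))"
    have up: "ereal (cmod l) \<le> Y" if "l \<in> g.sig" for l
      unfolding Y_def using sig_sub that by (intro SUP_upper) auto
    obtain l0 where l0: "l0 \<in> g.sig" using g.sig_nonempty by blast
    show ?thesis
    proof (cases Y)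
      case (real y)
      have "g.srad \<le> y" unfolding g.srad_def
        using up real by (intro cSup_least) (auto simp: g.sig_nonempty)
      then show ?thesis using real by (simp add: Y_def)
    next
      case PInf then show ?thesis by (simp add: Y_def)
    next
      case MInf then show ?thesis using up[OF l0] by simp
    qed
  qed
  then show ?thesis using r1 r2 by simp
qed

end

theorem mainTheorem4:
  fixes A T :: "'a::chilbert_space \<Rightarrow> 'a"
  assumes "positive_op A" and "A \<noteq> (\<lambda>x. 0)"
    and "T \<in> BAhalf A"
  shows "spec_rad_on (closure (range A))
           (\<lambda>x. orth_proj (closure (range A)) (T (orth_proj (closure (range A)) x)))
           = spec_radA A (diamond A T)
       \<and> ereal (spec_radA A (diamond A T)) \<le> (SUP l\<in>spectrumA A T. ereal (cmod l))"
proof -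
  interpret setting A T using assms by unfold_locales
  show ?thesis by (rule final)
qed

end
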